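(* There exists $c_0>0$ such that for all $b,c\in(0,c_0)$ there exists $n_0$ such that for every $n\ge n_0$ the following holds. If $G$ is a $3$-graph on $n$ vertices with $\delta(G) \ge (3/4-c)n$, then for any partition of $V(G)$ into two parts there are at least $bn^4$ copies of $K^3_4$ in $G$ with an even number of vertices in both parts.
   Context: A $3$-graph is a set of $3$-element subsets (edges) of a vertex set; $\delta(G)$ is the largest $m$ such that every pair of vertices lies in at least $m$ edges. A copy of $K^3_4$ in $G$ is a $4$-set of vertices all of whose $3$-subsets are edges of $G$. *)

theory Defs
  imports Complex_Main
begin

definition is_3graph :: "'a set \<Rightarrow> 'a set set \<Rightarrow> bool" where
  "is_3graph V G \<longleftrightarrow> (\<forall>e\<in>G. e \<subseteq> V \<and> card e = 3)"

definition codeg :: "'a set set \<Rightarrow> 'a \<Rightarrow> 'a \<Rightarrow> nat" where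
  "codeg G x y = card {e\<in>G. x \<in> e \<and> y \<in> e}"

definition min_codeg_ge :: "'a set \<Rightarrow> 'a set set \<Rightarrow> real \<Rightarrow> bool" where
  "min_codeg_ge V G m \<longleftrightarrow> (\<forall>x\<in>V. \<forall>y\<in>V. x \<noteq> y \<longrightarrow> real (codeg G x y) \<ge> m)"

definition K43_copies :: "'a set \<Rightarrow> 'a set set \<Rightarrow> 'a set set" where
  "K43_copies V G = {S. S \<subseteq> V \<and> card S = 4 \<and> (\<forall>T\<subseteq>S. card T = 3 \<longrightarrow> T \<in> G)}"

end

theory Submission
  imports Defs
begin


lemma card3D: "card {x,y,z::'a} = 3 \<Longrightarrow> x \<noteq> y \<and> x \<noteq> z \<and> y \<noteq> z"
  by (cases "x = y"; cases "x = z"; cases "y = z") (auto simp: card_insert_if)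

lemma sq_sum_ge:
  fixes f :: "'b \<Rightarrow> real"
  assumes "finite I"
  shows "(\<Sum>i\<in>I. f i)^2 \<le> real (card I) * (\<Sum>i\<in>I. (f i)^2)"
proof (cases "card I = 0")
  case True then show ?thesis using assms by simp
next
  case False
  define m where "m = (\<Sum>i\<in>I. f i) / card I"
  have "0 \<le> (\<Sum>i\<in>I. (f i - m)^2)" by (intro sum_nonneg) auto
  also have "\<dots> = (\<Sum>i\<in>I. (f i)^2 - (2*m) * f i + m^2)"
    by (rule sum.cong) (auto simp: power2_eq_square algebra_simps)
  also have "\<dots> = (\<Sum>i\<in>I. (f i)^2) - (2*m)*(\<Sum>i\<in>I. f i) + card I * m^2"
    by (simp add: sum.distrib sum_subtractf sum_distrib_left)
  finally have h: "0 \<le> (\<Sum>i\<in>I. (f i)^2) - 2*m*(\<Sum>i\<in>I. f i) + card I * m^2" .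
  have "(\<Sum>i\<in>I. f i) = card I * m" using False by (simp add: m_def)
  then have "(\<Sum>i\<in>I. f i)^2 = card I * (card I * m^2)" by (simp add: power2_eq_square)
  moreover have "card I * m^2 \<le> (\<Sum>i\<in>I. (f i)^2)" using h \<open>(\<Sum>i\<in>I. f i) = card I * m\<close>
    by (simp add: power2_eq_square algebra_simps)
  ultimately show ?thesis using False by (simp add: mult_left_mono)
qed

locale kset =
  fixes n :: nat and G :: "nat set set" and A B :: "nat set" and c :: real
  assumes G3: "is_3graph {..<n} G"
  and cod: "min_codeg_ge {..<n} G ((3/4 - c) * real n)"
  and AB: "A \<union> B = {..<n}" and ABd: "A \<inter> B = {}"
  and c_le: "c \<le> 1/200"
begin

abbreviation "V \<equiv> {..<n}"

definition bad :: "nat set \<Rightarrow> nat \<Rightarrow> nat \<Rightarrow> real" where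
  "bad X x y = real (card {v\<in>X. v \<noteq> x \<and> v \<noteq> y \<and> {x,y,v} \<notin> G})"

lemma AV: "A \<subseteq> V" and BV: "B \<subseteq> V"
  using AB by auto

lemma finA: "finite A" by (rule finite_subset[OF AV]) simp
lemma finB: "finite B" by (rule finite_subset[OF BV]) simp

lemma finAP[simp]: "finite {v\<in>A. P v}" and finBP[simp]: "finite {v\<in>B. P v}"
  using finA finB by auto

lemma cardAB: "card A + card B = n"
  using card_Un_disjoint[OF finA finB ABd] AB by simp

lemma edge_sub: "e \<in> G \<Longrightarrow> e \<subseteq> V \<and> card e = 3"
  using G3 unfolding is_3graph_def by auto

lemma edge3: "{x,y,z} \<in> G \<Longrightarrow> x \<in> V \<and> y \<in> V \<and> z \<in> V \<and> x \<noteq> y \<and> x \<noteq> z \<and> y \<noteq> z"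
proof -
  assume h: "{x,y,z} \<in> G"
  have s: "{x,y,z} \<subseteq> V" and c: "card {x,y,z} = 3" using edge_sub[OF h] by auto
  have "x \<noteq> y \<and> x \<noteq> z \<and> y \<noteq> z" using card3D[OF c] .
  moreover have "x \<in> V \<and> y \<in> V \<and> z \<in> V" using s by blast
  ultimately show ?thesis by blast
qed

lemma bad_sym: "bad X x y = bad X y x"
proof -
  have e: "\<And>v. {y,x,v} = {x,y,v}" by blast
  have "{v\<in>X. v \<noteq> x \<and> v \<noteq> y \<and> {x,y,v} \<notin> G} = {v\<in>X. v \<noteq> y \<and> v \<noteq> x \<and> {y,x,v} \<notin> G}"
    unfolding e by blast
  then show ?thesis unfolding bad_def by simp
qed

lemma bad_le: "finite X \<Longrightarrow> bad X x y \<le> real (card X)"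
  unfolding bad_def by (simp add: card_mono)

lemma codeg_eq:
  assumes "x \<in> V" "y \<in> V" "x \<noteq> y"
  shows "codeg G x y = card {v\<in>V. v \<noteq> x \<and> v \<noteq> y \<and> {x,y,v} \<in> G}"
proof -
  have "{e\<in>G. x \<in> e \<and> y \<in> e} = (\<lambda>v. {x,y,v}) ` {v\<in>V. v \<noteq> x \<and> v \<noteq> y \<and> {x,y,v} \<in> G}"
  proof (rule set_eqI, rule iffI)
    fix e assume e: "e \<in> {e\<in>G. x \<in> e \<and> y \<in> e}"
    then have eG: "e \<in> G" and xy: "x \<in> e" "y \<in> e" by auto
    from edge_sub[OF eG] have sub: "e \<subseteq> V" and c3: "card e = 3" by auto
    have fe: "finite e" using c3 card.infinite by fastforce
    have "card (e - {x,y}) = 1"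
      using card_Diff_subset[of "{x,y}" e] xy fe c3 assms(3) by auto
    then obtain v where v: "e - {x,y} = {v}" by (auto simp: card_1_singleton_iff)
    then have ev: "e = {x,y,v}" using xy by blast
    have "v \<noteq> x" "v \<noteq> y" using v by auto
    moreover have "v \<in> V" using v sub by auto
    ultimately show "e \<in> (\<lambda>v. {x,y,v}) ` {v\<in>V. v \<noteq> x \<and> v \<noteq> y \<and> {x,y,v} \<in> G}"
      using ev eG by auto
  qed auto
  moreover have "inj_on (\<lambda>v. {x,y,v}) {v\<in>V. v \<noteq> x \<and> v \<noteq> y \<and> {x,y,v} \<in> G}"
    by (rule inj_onI) (auto simp: insert_eq_iff doubleton_eq_iff)
  ultimately show ?thesis unfolding codeg_def by (simp add: card_image)
qed

lemma bad_pair: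
  assumes "x \<in> V" "y \<in> V" "x \<noteq> y"
  shows "bad A x y + bad B x y \<le> 51/200 * real n"
proof -
  let ?P = "\<lambda>v. v \<noteq> x \<and> v \<noteq> y"
  have split: "{v\<in>V. ?P v} = {v\<in>V. ?P v \<and> {x,y,v} \<in> G} \<union> ({v\<in>A. ?P v \<and> {x,y,v} \<notin> G} \<union> {v\<in>B. ?P v \<and> {x,y,v} \<notin> G})"
    using AB by auto
  have c1: "card {v\<in>V. ?P v} = n - 2"
  proof -
    have "{v\<in>V. ?P v} = V - {x,y}" by auto
    then show ?thesis using assms by (simp add: card_Diff_subset)
  qed
  have d1: "card ({v\<in>A. ?P v \<and> {x,y,v} \<notin> G} \<union> {v\<in>B. ?P v \<and> {x,y,v} \<notin> G}) = card {v\<in>A. ?P v \<and> {x,y,v} \<notin> G} + card {v\<in>B. ?P v \<and> {x,y,v} \<notin> G}"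
    by (rule card_Un_disjoint) (use finA finB ABd in \<open>auto intro: finite_subset[OF _ finA] finite_subset[OF _ finB]\<close>)
  have d2: "card {v\<in>V. ?P v} = card {v\<in>V. ?P v \<and> {x,y,v} \<in> G} + card ({v\<in>A. ?P v \<and> {x,y,v} \<notin> G} \<union> {v\<in>B. ?P v \<and> {x,y,v} \<notin> G})"
    by (subst split, rule card_Un_disjoint) auto
  have cg: "real (codeg G x y) \<ge> (3/4 - c) * real n"
    using cod assms unfolding min_codeg_ge_def by auto
  have n2: "n \<ge> 2" using assms by auto
  have "bad A x y + bad B x y = real (n - 2) - real (codeg G x y)"
    using d1 d2 c1 codeg_eq[OF assms] unfolding bad_def by simp
  also have "\<dots> \<le> real n - (3/4 - c) * real n" using cg n2 by (simp add: of_nat_diff)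
  also have "\<dots> = (1/4 + c) * real n" by (simp add: algebra_simps)
  also have "\<dots> \<le> 51/200 * real n" using c_le by (intro mult_right_mono) auto
  finally show ?thesis .
qed

end


lemma even4_iff:
  assumes "distinct [x,y,z,v]"
  shows "even (card ({x,y,z,v} \<inter> S)) \<longleftrightarrow> (((x\<in>S) = (y\<in>S)) = ((z\<in>S) = (v\<in>S)))"
  using assms
  by (cases "x \<in> S"; cases "y \<in> S"; cases "z \<in> S"; cases "v \<in> S") (auto simp: Int_insert_left card_insert_if)

lemma sub3_of4:
  assumes "distinct [x,y,z,v::'a]" "T \<subseteq> {x,y,z,v}" "card T = 3"
  shows "T = {x,y,z} \<or> T = {x,y,v} \<or> T = {x,z,v} \<or> T = {y,z,v}"
proof -
  have c4: "card {x,y,z,v} = 4" using assms(1) by auto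
  have "card ({x,y,z,v} - T) = 1"
    using card_Diff_subset[of T "{x,y,z,v}"] assms c4 finite_subset[OF assms(2)] by auto
  then obtain w where w: "{x,y,z,v} - T = {w}" by (auto simp: card_1_singleton_iff)
  then have T: "T = {x,y,z,v} - {w}" and wi: "w \<in> {x,y,z,v}" using assms(2) by auto
  show ?thesis using wi assms(1) unfolding T by auto
qed

context kset begin

definition Xs :: "nat \<Rightarrow> nat \<Rightarrow> nat \<Rightarrow> nat set" where
  "Xs x y z = {v\<in>V. (v\<in>A) = (((x\<in>A) = (y\<in>A)) = (z\<in>A))}"

definition Fs :: "nat \<Rightarrow> nat \<Rightarrow> nat \<Rightarrow> nat set" where
  "Fs x y z = {v\<in>Xs x y z. {x,y,v}\<in>G \<and> {x,z,v}\<in>G \<and> {y,z,v}\<in>G}"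

definition Ev :: "nat set set" where
  "Ev = {S \<in> K43_copies V G. even (card (S \<inter> A)) \<and> even (card (S \<inter> B))}"

lemma inB_iff: "w \<in> V \<Longrightarrow> (w \<in> B) = (w \<notin> A)"
  using AB ABd by auto

lemma Ev_mem:
  assumes "{x,y,z} \<in> G" "v \<in> Fs x y z"
  shows "{x,y,z,v} \<in> Ev"
proof -
  from assms(2) have vX: "v \<in> Xs x y z" and e: "{x,y,v}\<in>G" "{x,z,v}\<in>G" "{y,z,v}\<in>G"
    unfolding Fs_def by auto
  have d: "distinct [x,y,z,v]" using edge3[OF assms(1)] edge3[OF e(1)] edge3[OF e(2)] by auto
  have inV: "x \<in> V" "y \<in> V" "z \<in> V" "v \<in> V" using edge3[OF assms(1)] edge3[OF e(1)] by auto
  have par: "((x\<in>A) = (y\<in>A)) = ((z\<in>A) = (v\<in>A))" using vX unfolding Xs_def by auto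
  have evA: "even (card ({x,y,z,v} \<inter> A))" using even4_iff[OF d] par by simp
  have parB: "((x\<in>B) = (y\<in>B)) = ((z\<in>B) = (v\<in>B))" using par inB_iff inV by auto
  have evB: "even (card ({x,y,z,v} \<inter> B))" using even4_iff[OF d] parB by simp
  have K: "{x,y,z,v} \<in> K43_copies V G"
    unfolding K43_copies_def
  proof (intro CollectI conjI allI impI)
    show "{x,y,z,v} \<subseteq> V" using inV by auto
    show "card {x,y,z,v} = 4" using d by auto
    fix T assume "T \<subseteq> {x,y,z,v}" "card T = 3"
    then show "T \<in> G" using sub3_of4[OF d] assms(1) e by auto
  qed
  show ?thesis unfolding Ev_def using K evA evB by auto
qed

lemma finEv: "finite Ev"
proof -
  have "Ev \<subseteq> Pow V" unfolding Ev_def K43_copies_def by auto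
  then show ?thesis by (rule finite_subset) auto
qed

lemma cardEv4: "S \<in> Ev \<Longrightarrow> card S = 4"
  unfolding Ev_def K43_copies_def by auto

lemma finEvS: "S \<in> Ev \<Longrightarrow> finite S"
  using cardEv4 card.infinite by fastforce

definition Mcnt :: nat where
  "Mcnt = (\<Sum>x\<in>V. \<Sum>y\<in>V. \<Sum>z\<in>V. if {x,y,z} \<in> G then card (Fs x y z) else 0)"

lemma finFs: "finite (Fs x y z)"
  unfolding Fs_def Xs_def by auto

lemma Mcnt_le: "real Mcnt \<le> 256 * real (card Ev)"
proof -
  let ?S = "SIGMA x:V. SIGMA y:V. SIGMA z:{z\<in>V. {x,y,z}\<in>G}. Fs x y z"
  have "Mcnt = card ?S"
    unfolding Mcnt_def using finFs
    by (simp add: sum.inter_filter[symmetric] finite_SigmaI)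
  also have "card ?S \<le> card (\<Union>S\<in>Ev. S \<times> S \<times> S \<times> S)"
  proof (rule card_mono)
    show "finite (\<Union>S\<in>Ev. S \<times> S \<times> S \<times> S)"
      using finEv finEvS by (auto intro!: finite_cartesian_product)
    show "?S \<subseteq> (\<Union>S\<in>Ev. S \<times> S \<times> S \<times> S)"
    proof
      fix t assume "t \<in> ?S"
      then obtain x y z v where t: "t = (x,y,z,v)" and g: "{x,y,z}\<in>G" and v: "v \<in> Fs x y z" by auto
      show "t \<in> (\<Union>S\<in>Ev. S \<times> S \<times> S \<times> S)"
        using Ev_mem[OF g v] t by blast
    qed
  qed
  also have "\<dots> \<le> (\<Sum>S\<in>Ev. card (S \<times> S \<times> S \<times> S))"
    by (rule card_UN_le[OF finEv])
  also have "\<dots> = (\<Sum>S\<in>Ev. 256)"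
    by (rule sum.cong) (auto simp: card_cartesian_product cardEv4)
  finally show ?thesis by simp
qed

end


context kset begin

lemma finXs: "finite (Xs x y z)" unfolding Xs_def by auto

lemma per_t:
  assumes g: "{x,y,z} \<in> G"
  shows "real (card (Fs x y z)) \<ge> real (card (Xs x y z)) - 3 - bad (Xs x y z) x y - bad (Xs x y z) x z - bad (Xs x y z) y z"
proof -
  let ?X = "Xs x y z"
  let ?N1 = "{v\<in>?X. v \<noteq> x \<and> v \<noteq> y \<and> {x,y,v} \<notin> G}"
  let ?N2 = "{v\<in>?X. v \<noteq> x \<and> v \<noteq> z \<and> {x,z,v} \<notin> G}"
  let ?N3 = "{v\<in>?X. v \<noteq> y \<and> v \<noteq> z \<and> {y,z,v} \<notin> G}"
  have f: "finite ?X" by (rule finXs)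
  have "card ?X \<le> card ((?X - {x,y,z}) \<union> {x,y,z})"
    by (rule card_mono) (use f in auto)
  also have "\<dots> \<le> card (?X - {x,y,z}) + card {x,y,z}" by (rule card_Un_le)
  also have "card {x,y,z} \<le> 3" by (simp add: card_insert_le_m1)
  finally have c1: "card ?X \<le> card (?X - {x,y,z}) + 3" by simp
  have "card (?X - {x,y,z}) \<le> card (Fs x y z \<union> ?N1 \<union> ?N2 \<union> ?N3)"
    by (rule card_mono) (use f in \<open>auto simp: Fs_def\<close>)
  also have "\<dots> \<le> card (Fs x y z) + card ?N1 + card ?N2 + card ?N3"
    by (meson card_Un_le add_le_mono le_refl order_trans)
  finally have c2: "card (?X - {x,y,z}) \<le> card (Fs x y z) + card ?N1 + card ?N2 + card ?N3" .
  show ?thesis using c1 c2 unfolding bad_def by linarith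
qed

lemma Xs_perm1: "Xs x z y = Xs x y z" unfolding Xs_def by auto
lemma Xs_perm2: "Xs y z x = Xs x y z" unfolding Xs_def by auto

definition gb :: "nat \<Rightarrow> nat \<Rightarrow> nat \<Rightarrow> real" where
  "gb x y z = (if {x,y,z} \<in> G then bad (Xs x y z) x y else 0)"

lemma gb_p1: "gb x z y = (if {x,y,z} \<in> G then bad (Xs x y z) x z else 0)"
proof -
  have "{x,z,y} = {x,y,z}" by auto
  then show ?thesis unfolding gb_def using Xs_perm1[of x z y] Xs_perm1[of x y z] by simp
qed

lemma gb_p2: "gb y z x = (if {x,y,z} \<in> G then bad (Xs x y z) y z else 0)"
proof -
  have "{y,z,x} = {x,y,z}" by auto
  then show ?thesis by (simp only: gb_def Xs_perm2[where x=x and y=y and z=z])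
qed

lemma sym1: "(\<Sum>x\<in>V. \<Sum>y\<in>V. \<Sum>z\<in>V. if {x,y,z} \<in> G then bad (Xs x y z) x z else 0) = (\<Sum>x\<in>V. \<Sum>y\<in>V. \<Sum>z\<in>V. gb x y z)"
proof -
  have "(\<Sum>x\<in>V. \<Sum>y\<in>V. \<Sum>z\<in>V. if {x,y,z} \<in> G then bad (Xs x y z) x z else 0) = (\<Sum>x\<in>V. \<Sum>y\<in>V. \<Sum>z\<in>V. gb x z y)"
    by (simp add: gb_p1)
  also have "\<dots> = (\<Sum>x\<in>V. \<Sum>z\<in>V. \<Sum>y\<in>V. gb x z y)"
    by (rule sum.cong[OF refl], rule sum.swap)
  finally show ?thesis .
qed

lemma sym2: "(\<Sum>x\<in>V. \<Sum>y\<in>V. \<Sum>z\<in>V. if {x,y,z} \<in> G then bad (Xs x y z) y z else 0) = (\<Sum>x\<in>V. \<Sum>y\<in>V. \<Sum>z\<in>V. gb x y z)"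
proof -
  have "(\<Sum>x\<in>V. \<Sum>y\<in>V. \<Sum>z\<in>V. if {x,y,z} \<in> G then bad (Xs x y z) y z else 0) = (\<Sum>x\<in>V. \<Sum>y\<in>V. \<Sum>z\<in>V. gb y z x)"
    by (simp add: gb_p2)
  also have "\<dots> = (\<Sum>y\<in>V. \<Sum>x\<in>V. \<Sum>z\<in>V. gb y z x)"
    by (rule sum.swap)
  also have "\<dots> = (\<Sum>y\<in>V. \<Sum>z\<in>V. \<Sum>x\<in>V. gb y z x)"
    by (rule sum.cong[OF refl], rule sum.swap)
  finally show ?thesis .
qed

lemma M_ge: "real Mcnt \<ge> (\<Sum>x\<in>V. \<Sum>y\<in>V. \<Sum>z\<in>V. if {x,y,z} \<in> G then real (card (Xs x y z)) - 3 - 3 * bad (Xs x y z) x y else 0)"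
proof -
  have "real Mcnt = (\<Sum>x\<in>V. \<Sum>y\<in>V. \<Sum>z\<in>V. if {x,y,z} \<in> G then real (card (Fs x y z)) else 0)"
    unfolding Mcnt_def of_nat_sum by (intro sum.cong refl) simp
  also have "\<dots> \<ge> (\<Sum>x\<in>V. \<Sum>y\<in>V. \<Sum>z\<in>V. if {x,y,z} \<in> G then real (card (Xs x y z)) - 3 - bad (Xs x y z) x y - bad (Xs x y z) x z - bad (Xs x y z) y z else 0)"
    by (intro sum_mono) (auto intro: per_t)
  also have "(\<Sum>x\<in>V. \<Sum>y\<in>V. \<Sum>z\<in>V. if {x,y,z} \<in> G then real (card (Xs x y z)) - 3 - bad (Xs x y z) x y - bad (Xs x y z) x z - bad (Xs x y z) y z else 0)
     = (\<Sum>x\<in>V. \<Sum>y\<in>V. \<Sum>z\<in>V. (if {x,y,z} \<in> G then real (card (Xs x y z)) - 3 else 0) - gb x y z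
          - (if {x,y,z} \<in> G then bad (Xs x y z) x z else 0) - (if {x,y,z} \<in> G then bad (Xs x y z) y z else 0))"
    unfolding gb_def by (intro sum.cong refl) auto
  also have "\<dots> = (\<Sum>x\<in>V. \<Sum>y\<in>V. \<Sum>z\<in>V. (if {x,y,z} \<in> G then real (card (Xs x y z)) - 3 else 0))
      - (\<Sum>x\<in>V. \<Sum>y\<in>V. \<Sum>z\<in>V. gb x y z)
      - (\<Sum>x\<in>V. \<Sum>y\<in>V. \<Sum>z\<in>V. if {x,y,z} \<in> G then bad (Xs x y z) x z else 0)
      - (\<Sum>x\<in>V. \<Sum>y\<in>V. \<Sum>z\<in>V. if {x,y,z} \<in> G then bad (Xs x y z) y z else 0)"
    by (simp add: sum_subtractf)
  also have "\<dots> = (\<Sum>x\<in>V. \<Sum>y\<in>V. \<Sum>z\<in>V. (if {x,y,z} \<in> G then real (card (Xs x y z)) - 3 else 0))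
      - 3 * (\<Sum>x\<in>V. \<Sum>y\<in>V. \<Sum>z\<in>V. gb x y z)"
    unfolding sym1 sym2 by simp
  also have "\<dots> = (\<Sum>x\<in>V. \<Sum>y\<in>V. \<Sum>z\<in>V. (if {x,y,z} \<in> G then real (card (Xs x y z)) - 3 else 0) - 3 * gb x y z)"
    by (simp add: sum_subtractf sum_distrib_left)
  also have "\<dots> = (\<Sum>x\<in>V. \<Sum>y\<in>V. \<Sum>z\<in>V. if {x,y,z} \<in> G then real (card (Xs x y z)) - 3 - 3 * bad (Xs x y z) x y else 0)"
    unfolding gb_def by (intro sum.cong refl) simp
  finally show ?thesis .
qed

end


lemma pairterm:
  fixes e a s g N :: real
  assumes "a - 2 \<le> e" "e \<le> a" "0 \<le> e" "0 \<le> g" "g \<le> s" "s \<le> N" "a \<le> N"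
  shows "e * (s - 3 - 3*g) \<ge> a * (s - 3*g) - 9*N"
proof -
  have d: "e * (s - 3 - 3*g) - a * (s - 3*g) = (e - a) * (s - 3*g) - 3*e" by (simp add: algebra_simps)
  have "\<bar>(e - a) * (s - 3*g)\<bar> = \<bar>e - a\<bar> * \<bar>s - 3*g\<bar>" by (rule abs_mult)
  also have "\<dots> \<le> 2 * (2*N)"
    by (rule mult_mono) (use assms in auto)
  finally have "(e - a) * (s - 3*g) \<ge> -4*N" by linarith
  then show ?thesis using d assms by linarith
qed

context kset begin

definition K1 :: "nat \<Rightarrow> nat \<Rightarrow> nat set" where
  "K1 x y = (if (x\<in>A) = (y\<in>A) then A else B)"
definition K2 :: "nat \<Rightarrow> nat \<Rightarrow> nat set" where
  "K2 x y = (if (x\<in>A) = (y\<in>A) then B else A)"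

lemma Xs_A: "z \<in> A \<Longrightarrow> Xs x y z = K1 x y"
  unfolding Xs_def K1_def using AB ABd by auto
lemma Xs_B: "z \<in> B \<Longrightarrow> Xs x y z = K2 x y"
  unfolding Xs_def K2_def using AB ABd by auto

lemma cardZ:
  assumes "x \<in> V" "y \<in> V" "x \<noteq> y" "X = A \<or> X = B"
  shows "real (card X) - 2 - bad X x y \<le> real (card {z\<in>X. {x,y,z}\<in>G})"
    and "real (card {z\<in>X. {x,y,z}\<in>G}) \<le> real (card X) - bad X x y"
proof -
  have fX: "finite X" using assms(4) finA finB by auto
  have u: "{z\<in>X. {x,y,z}\<in>G} \<union> {v\<in>X. v \<noteq> x \<and> v \<noteq> y \<and> {x,y,v} \<notin> G} = X - {x,y}"
    using edge3 by auto
  have "card ({z\<in>X. {x,y,z}\<in>G} \<union> {v\<in>X. v \<noteq> x \<and> v \<noteq> y \<and> {x,y,v} \<notin> G})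
     = card {z\<in>X. {x,y,z}\<in>G} + card {v\<in>X. v \<noteq> x \<and> v \<noteq> y \<and> {x,y,v} \<notin> G}"
    by (rule card_Un_disjoint) (use fX in auto)
  then have eq: "card {z\<in>X. {x,y,z}\<in>G} + card {v\<in>X. v \<noteq> x \<and> v \<noteq> y \<and> {x,y,v} \<notin> G} = card (X - {x,y})"
    using u by simp
  have l1: "card X \<le> card (X - {x,y}) + 2"
  proof -
    have "card X \<le> card ((X - {x,y}) \<union> {x,y})" by (rule card_mono) (use fX in auto)
    also have "\<dots> \<le> card (X - {x,y}) + card {x,y}" by (rule card_Un_le)
    also have "card {x,y} \<le> 2" by (simp add: card_insert_le_m1)
    finally show ?thesis by simp
  qed
  have l2: "card (X - {x,y}) \<le> card X" by (rule card_mono) (use fX in auto)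
  show "real (card X) - 2 - bad X x y \<le> real (card {z\<in>X. {x,y,z}\<in>G})"
    using eq l1 unfolding bad_def by linarith
  show "real (card {z\<in>X. {x,y,z}\<in>G}) \<le> real (card X) - bad X x y"
    using eq l2 unfolding bad_def by linarith
qed

definition Psi :: "nat \<Rightarrow> nat \<Rightarrow> real" where
  "Psi x y = (let a = real (card A); b = real (card B); al = bad A x y; be = bad B x y in
     if (x\<in>A) = (y\<in>A) then (a - al)*(a - 3*al) + (b - be)*(b - 3*be)
     else (a - al)*(b - 3*be) + (b - be)*(a - 3*al))"

lemma finV: "finite V" by simp

lemma Phi_ge:
  assumes "x \<in> V" "y \<in> V" "x \<noteq> y"
  shows "(\<Sum>z\<in>V. if {x,y,z} \<in> G then real (card (Xs x y z)) - 3 - 3 * bad (Xs x y z) x y else 0)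
         \<ge> Psi x y - 18 * real n"
proof -
  let ?L1 = "real (card (K1 x y)) - 3 - 3 * bad (K1 x y) x y"
  let ?L2 = "real (card (K2 x y)) - 3 - 3 * bad (K2 x y) x y"
  let ?f = "\<lambda>z. if {x,y,z} \<in> G then real (card (Xs x y z)) - 3 - 3 * bad (Xs x y z) x y else 0"
  have "(\<Sum>z\<in>V. ?f z) = (\<Sum>z\<in>A. ?f z) + (\<Sum>z\<in>B. ?f z)"
    using sum.union_disjoint[OF finA finB ABd, of ?f] AB by simp
  also have "(\<Sum>z\<in>A. ?f z) = (\<Sum>z\<in>A. if {x,y,z} \<in> G then ?L1 else 0)"
    by (rule sum.cong) (auto simp: Xs_A)
  also have "\<dots> = real (card {z\<in>A. {x,y,z}\<in>G}) * ?L1"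
    by (simp add: sum.inter_filter[symmetric] finA)
  also have "(\<Sum>z\<in>B. ?f z) = (\<Sum>z\<in>B. if {x,y,z} \<in> G then ?L2 else 0)"
    by (rule sum.cong) (auto simp: Xs_B)
  also have "\<dots> = real (card {z\<in>B. {x,y,z}\<in>G}) * ?L2"
    by (simp add: sum.inter_filter[symmetric] finB)
  finally have eq: "(\<Sum>z\<in>V. ?f z) = real (card {z\<in>A. {x,y,z}\<in>G}) * ?L1 + real (card {z\<in>B. {x,y,z}\<in>G}) * ?L2" .
  have nA: "real (card A) \<le> n" "real (card B) \<le> n" using cardAB by auto
  have K1c: "K1 x y = A \<or> K1 x y = B" "K2 x y = A \<or> K2 x y = B" unfolding K1_def K2_def by auto
  have fK: "finite (K1 x y)" "finite (K2 x y)" using K1c finA finB by auto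
  have bK: "0 \<le> bad (K1 x y) x y" "bad (K1 x y) x y \<le> card (K1 x y)"
           "0 \<le> bad (K2 x y) x y" "bad (K2 x y) x y \<le> card (K2 x y)"
    using bad_le fK unfolding bad_def by auto
  have kn: "real (card (K1 x y)) \<le> n" "real (card (K2 x y)) \<le> n" using K1c nA by auto
  have bA: "0 \<le> bad A x y" "bad A x y \<le> card A" "0 \<le> bad B x y" "bad B x y \<le> card B"
    using bad_le finA finB unfolding bad_def by auto
  have t1: "real (card {z\<in>A. {x,y,z}\<in>G}) * ?L1 \<ge> (real (card A) - bad A x y) * (real (card (K1 x y)) - 3 * bad (K1 x y) x y) - 9 * real n"
    apply (rule pairterm)
    using cardZ[OF assms, of A] bK kn nA bA by auto
  have t2: "real (card {z\<in>B. {x,y,z}\<in>G}) * ?L2 \<ge> (real (card B) - bad B x y) * (real (card (K2 x y)) - 3 * bad (K2 x y) x y) - 9 * real n"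
    apply (rule pairterm)
    using cardZ[OF assms, of B] bK kn nA bA by auto
  have "Psi x y = (real (card A) - bad A x y) * (real (card (K1 x y)) - 3 * bad (K1 x y) x y)
       + (real (card B) - bad B x y) * (real (card (K2 x y)) - 3 * bad (K2 x y) x y)"
    unfolding Psi_def K1_def K2_def Let_def by auto
  then show ?thesis using eq t1 t2 by linarith
qed

lemma Phi_diag: "(\<Sum>z\<in>V. if {x,x,z} \<in> G then r z else 0) = (0::real)"
proof -
  have "\<And>z. {x,x,z} \<notin> G" using edge3 by blast
  then show ?thesis by (simp del: insert_absorb2)
qed

lemma M_pairs: "real Mcnt \<ge> (\<Sum>x\<in>V. \<Sum>y\<in>V-{x}. Psi x y) - 18 * real n ^ 3"
proof -
  let ?f = "\<lambda>x y z. if {x,y,z} \<in> G then real (card (Xs x y z)) - 3 - 3 * bad (Xs x y z) x y else 0"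
  have "(\<Sum>x\<in>V. \<Sum>y\<in>V. \<Sum>z\<in>V. ?f x y z) = (\<Sum>x\<in>V. \<Sum>y\<in>V-{x}. \<Sum>z\<in>V. ?f x y z)"
  proof (rule sum.cong[OF refl])
    fix x assume x: "x \<in> V"
    have "(\<Sum>y\<in>V. \<Sum>z\<in>V. ?f x y z) = (\<Sum>y\<in>insert x (V-{x}). \<Sum>z\<in>V. ?f x y z)"
      using x by (simp add: insert_absorb)
    also have "\<dots> = (\<Sum>z\<in>V. ?f x x z) + (\<Sum>y\<in>V-{x}. \<Sum>z\<in>V. ?f x y z)"
      by (rule sum.insert) auto
    also have "(\<Sum>z\<in>V. ?f x x z) = 0" by (rule Phi_diag)
    finally show "(\<Sum>y\<in>V. \<Sum>z\<in>V. ?f x y z) = (\<Sum>y\<in>V-{x}. \<Sum>z\<in>V. ?f x y z)" by simp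
  qed
  moreover have "(\<Sum>x\<in>V. \<Sum>y\<in>V-{x}. \<Sum>z\<in>V. ?f x y z) \<ge> (\<Sum>x\<in>V. \<Sum>y\<in>V-{x}. Psi x y - 18 * real n)"
    by (intro sum_mono Phi_ge) auto
  moreover have "(\<Sum>x\<in>V. \<Sum>y\<in>V-{x}. Psi x y - 18 * real n) = (\<Sum>x\<in>V. \<Sum>y\<in>V-{x}. Psi x y) - real n * (real (n - 1) * (18 * real n))"
    by (cases n) (simp_all add: sum_subtractf)
  moreover have "real n * (real (n - 1) * (18 * real n)) \<le> 18 * real n ^ 3"
  proof -
    have h: "real (n - 1) \<le> real n" by simp
    have "real n * (real (n - 1) * (18 * real n)) = (18 * real n * real n) * real (n - 1)" by (simp add: algebra_simps)
    also have "\<dots> \<le> (18 * real n * real n) * real n" by (rule mult_left_mono[OF h]) auto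
    also have "\<dots> = 18 * real n ^ 3" by (simp add: power3_eq_cube)
    finally show ?thesis .
  qed
  ultimately show ?thesis using M_ge by linarith
qed

end

definition Sf :: "real \<Rightarrow> real \<Rightarrow> real \<Rightarrow> real \<Rightarrow> real \<Rightarrow> real" where
 "Sf a u v w z = a^4 + (1-a)^4 + 6*a^2*(1-a)^2 - 4*a^3*u - 12*a^2*(1-a)*v - 12*a*(1-a)^2*w - 4*(1-a)^3*z + 3*a^2*(u^2+v^2) + 3*(1-a)^2*(w^2+z^2)"
lemma RL0:
  fixes a u v w z eta DD :: real
  assumes DD: "DD = 51/200" and h: "(0::real) \<le> a" "a \<le> (1/8::real)" "0 \<le> u" "0 \<le> v" "0 \<le> w" "0 \<le> z"
    "u + v \<le> DD" "w + z \<le> DD" "a^2*v + (1-a)^2*w \<le> a*(1-a)*DD + eta" "0 \<le> eta"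
  shows "Sf a u v w z \<ge> 1/1000 - 4*eta"
proof -
  have id: "Sf a u v w z - 1/1000 = (62433/125::real)*(a-(0::real))^0*((1/8::real)-a)^4 + (1111983/500::real)*(a-(0::real))^1*((1/8::real)-a)^3 + (12011801/4000::real)*(a-(0::real))^2*((1/8::real)-a)^2 + (8859151/6000::real)*(a-(0::real))^3*((1/8::real)-a)^1 + (717641/4000::real)*(a-(0::real))^4*((1/8::real)-a)^0 + (311/32::real)*a^2*(DD-u-v) + (71/32::real)*(1-a)^2*(DD-w-z) + (0::real)*(a*(1-a)*DD + eta - a^2*v - (1-a)^2*w) + (303/32::real)*a^2*u + (0::real)*a^2*v + (47/32::real)*(1-a)^2*w + (0::real)*(1-a)^2*z + 3*a^2*(u + ((311/32::real) - 4*a - (303/32::real))/6)^2 + 3*a^2*(v + ((311/32::real) + (0::real) - 12*(1-a) - (0::real))/6)^2 + 3*(1-a)^2*(w + ((71/32::real) + (0::real) - 12*a - (47/32::real))/6)^2 + 3*(1-a)^2*(z + ((71/32::real) - 4*(1-a) - (0::real))/6)^2 - (0::real)*eta"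
    unfolding Sf_def DD by (simp add: field_simps power_numeral_reduce)
  have f0: "0 \<le> (62433/125::real)*(a-(0::real))^0*((1/8::real)-a)^4" using h by (intro mult_nonneg_nonneg zero_le_power) auto
  have f1: "0 \<le> (1111983/500::real)*(a-(0::real))^1*((1/8::real)-a)^3" using h by (intro mult_nonneg_nonneg zero_le_power) auto
  have f2: "0 \<le> (12011801/4000::real)*(a-(0::real))^2*((1/8::real)-a)^2" using h by (intro mult_nonneg_nonneg zero_le_power) auto
  have f3: "0 \<le> (8859151/6000::real)*(a-(0::real))^3*((1/8::real)-a)^1" using h by (intro mult_nonneg_nonneg zero_le_power) auto
  have f4: "0 \<le> (717641/4000::real)*(a-(0::real))^4*((1/8::real)-a)^0" using h by (intro mult_nonneg_nonneg zero_le_power) auto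
  have f5: "0 \<le> (311/32::real)*a^2*(DD-u-v)" using h by (intro mult_nonneg_nonneg zero_le_power) auto
  have f6: "0 \<le> (71/32::real)*(1-a)^2*(DD-w-z)" using h by (intro mult_nonneg_nonneg zero_le_power) auto
  have f7: "0 \<le> (0::real)*(a*(1-a)*DD + eta - a^2*v - (1-a)^2*w)" using h by (intro mult_nonneg_nonneg zero_le_power) auto
  have f8: "0 \<le> (303/32::real)*a^2*u" using h by (intro mult_nonneg_nonneg zero_le_power) auto
  have f9: "0 \<le> (0::real)*a^2*v" using h by (intro mult_nonneg_nonneg zero_le_power) auto
  have f10: "0 \<le> (47/32::real)*(1-a)^2*w" using h by (intro mult_nonneg_nonneg zero_le_power) auto
  have f11: "0 \<le> (0::real)*(1-a)^2*z" using h by (intro mult_nonneg_nonneg zero_le_power) auto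
  have f12: "0 \<le> 3*a^2*(u + ((311/32::real) - 4*a - (303/32::real))/6)^2" by simp
  have f13: "0 \<le> 3*a^2*(v + ((311/32::real) + (0::real) - 12*(1-a) - (0::real))/6)^2" by simp
  have f14: "0 \<le> 3*(1-a)^2*(w + ((71/32::real) + (0::real) - 12*a - (47/32::real))/6)^2" by simp
  have f15: "0 \<le> 3*(1-a)^2*(z + ((71/32::real) - 4*(1-a) - (0::real))/6)^2" by simp
  have t3: "(0::real)*eta \<le> 4*eta" using h by auto
  show ?thesis using id t3 f0 f1 f2 f3 f4 f5 f6 f7 f8 f9 f10 f11 f12 f13 f14 f15 by linarith
qed

lemma RL1:
  fixes a u v w z eta DD :: real
  assumes DD: "DD = 51/200" and h: "(1/8::real) \<le> a" "a \<le> (1/4::real)" "0 \<le> u" "0 \<le> v" "0 \<le> w" "0 \<le> z"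
    "u + v \<le> DD" "w + z \<le> DD" "a^2*v + (1-a)^2*w \<le> a*(1-a)*DD + eta" "0 \<le> eta"
  shows "Sf a u v w z \<ge> 1/1000 - 4*eta"
proof -
  have id: "Sf a u v w z - 1/1000 = (2215937/8000::real)*(a-(1/8::real))^0*((1/4::real)-a)^4 + (16619897/12000::real)*(a-(1/8::real))^1*((1/4::real)-a)^3 + (15214637/8000::real)*(a-(1/8::real))^2*((1/4::real)-a)^2 + (5246921/6000::real)*(a-(1/8::real))^3*((1/4::real)-a)^1 + (371939/6000::real)*(a-(1/8::real))^4*((1/4::real)-a)^0 + (263/32::real)*a^2*(DD-u-v) + (2::real)*(1-a)^2*(DD-w-z) + (0::real)*(a*(1-a)*DD + eta - a^2*v - (1-a)^2*w) + (239/32::real)*a^2*u + (0::real)*a^2*v + (0::real)*(1-a)^2*w + (0::real)*(1-a)^2*z + 3*a^2*(u + ((263/32::real) - 4*a - (239/32::real))/6)^2 + 3*a^2*(v + ((263/32::real) + (0::real) - 12*(1-a) - (0::real))/6)^2 + 3*(1-a)^2*(w + ((2::real) + (0::real) - 12*a - (0::real))/6)^2 + 3*(1-a)^2*(z + ((2::real) - 4*(1-a) - (0::real))/6)^2 - (0::real)*eta"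
    unfolding Sf_def DD by (simp add: field_simps power_numeral_reduce)
  have f0: "0 \<le> (2215937/8000::real)*(a-(1/8::real))^0*((1/4::real)-a)^4" using h by (intro mult_nonneg_nonneg zero_le_power) auto
  have f1: "0 \<le> (16619897/12000::real)*(a-(1/8::real))^1*((1/4::real)-a)^3" using h by (intro mult_nonneg_nonneg zero_le_power) auto
  have f2: "0 \<le> (15214637/8000::real)*(a-(1/8::real))^2*((1/4::real)-a)^2" using h by (intro mult_nonneg_nonneg zero_le_power) auto
  have f3: "0 \<le> (5246921/6000::real)*(a-(1/8::real))^3*((1/4::real)-a)^1" using h by (intro mult_nonneg_nonneg zero_le_power) auto
  have f4: "0 \<le> (371939/6000::real)*(a-(1/8::real))^4*((1/4::real)-a)^0" using h by (intro mult_nonneg_nonneg zero_le_power) auto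
  have f5: "0 \<le> (263/32::real)*a^2*(DD-u-v)" using h by (intro mult_nonneg_nonneg zero_le_power) auto
  have f6: "0 \<le> (2::real)*(1-a)^2*(DD-w-z)" using h by (intro mult_nonneg_nonneg zero_le_power) auto
  have f7: "0 \<le> (0::real)*(a*(1-a)*DD + eta - a^2*v - (1-a)^2*w)" using h by (intro mult_nonneg_nonneg zero_le_power) auto
  have f8: "0 \<le> (239/32::real)*a^2*u" using h by (intro mult_nonneg_nonneg zero_le_power) auto
  have f9: "0 \<le> (0::real)*a^2*v" using h by (intro mult_nonneg_nonneg zero_le_power) auto
  have f10: "0 \<le> (0::real)*(1-a)^2*w" using h by (intro mult_nonneg_nonneg zero_le_power) auto
  have f11: "0 \<le> (0::real)*(1-a)^2*z" using h by (intro mult_nonneg_nonneg zero_le_power) auto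
  have f12: "0 \<le> 3*a^2*(u + ((263/32::real) - 4*a - (239/32::real))/6)^2" by simp
  have f13: "0 \<le> 3*a^2*(v + ((263/32::real) + (0::real) - 12*(1-a) - (0::real))/6)^2" by simp
  have f14: "0 \<le> 3*(1-a)^2*(w + ((2::real) + (0::real) - 12*a - (0::real))/6)^2" by simp
  have f15: "0 \<le> 3*(1-a)^2*(z + ((2::real) - 4*(1-a) - (0::real))/6)^2" by simp
  have t3: "(0::real)*eta \<le> 4*eta" using h by auto
  show ?thesis using id t3 f0 f1 f2 f3 f4 f5 f6 f7 f8 f9 f10 f11 f12 f13 f14 f15 by linarith
qed

lemma RL2:
  fixes a u v w z eta DD :: real
  assumes DD: "DD = 51/200" and h: "(1/4::real) \<le> a" "a \<le> (5/16::real)" "0 \<le> u" "0 \<le> v" "0 \<le> w" "0 \<le> z"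
    "u + v \<le> DD" "w + z \<le> DD" "a^2*v + (1-a)^2*w \<le> a*(1-a)*DD + eta" "0 \<le> eta"
  shows "Sf a u v w z \<ge> 1/1000 - 4*eta"
proof -
  have id: "Sf a u v w z - 1/1000 = (806609/375::real)*(a-(1/4::real))^0*((5/16::real)-a)^4 + (6653617/750::real)*(a-(1/4::real))^1*((5/16::real)-a)^3 + (23946483/2000::real)*(a-(1/4::real))^2*((5/16::real)-a)^2 + (18294533/3000::real)*(a-(1/4::real))^3*((5/16::real)-a)^1 + (1653603/2000::real)*(a-(1/4::real))^4*((5/16::real)-a)^0 + (185/32::real)*a^2*(DD-u-v) + (55/32::real)*(1-a)^2*(DD-w-z) + (21/16::real)*(a*(1-a)*DD + eta - a^2*v - (1-a)^2*w) + (149/32::real)*a^2*u + (0::real)*a^2*v + (0::real)*(1-a)^2*w + (0::real)*(1-a)^2*z + 3*a^2*(u + ((185/32::real) - 4*a - (149/32::real))/6)^2 + 3*a^2*(v + ((185/32::real) + (21/16::real) - 12*(1-a) - (0::real))/6)^2 + 3*(1-a)^2*(w + ((55/32::real) + (21/16::real) - 12*a - (0::real))/6)^2 + 3*(1-a)^2*(z + ((55/32::real) - 4*(1-a) - (0::real))/6)^2 - (21/16::real)*eta"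
    unfolding Sf_def DD by (simp add: field_simps power_numeral_reduce)
  have f0: "0 \<le> (806609/375::real)*(a-(1/4::real))^0*((5/16::real)-a)^4" using h by (intro mult_nonneg_nonneg zero_le_power) auto
  have f1: "0 \<le> (6653617/750::real)*(a-(1/4::real))^1*((5/16::real)-a)^3" using h by (intro mult_nonneg_nonneg zero_le_power) auto
  have f2: "0 \<le> (23946483/2000::real)*(a-(1/4::real))^2*((5/16::real)-a)^2" using h by (intro mult_nonneg_nonneg zero_le_power) auto
  have f3: "0 \<le> (18294533/3000::real)*(a-(1/4::real))^3*((5/16::real)-a)^1" using h by (intro mult_nonneg_nonneg zero_le_power) auto
  have f4: "0 \<le> (1653603/2000::real)*(a-(1/4::real))^4*((5/16::real)-a)^0" using h by (intro mult_nonneg_nonneg zero_le_power) auto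
  have f5: "0 \<le> (185/32::real)*a^2*(DD-u-v)" using h by (intro mult_nonneg_nonneg zero_le_power) auto
  have f6: "0 \<le> (55/32::real)*(1-a)^2*(DD-w-z)" using h by (intro mult_nonneg_nonneg zero_le_power) auto
  have f7: "0 \<le> (21/16::real)*(a*(1-a)*DD + eta - a^2*v - (1-a)^2*w)" using h by (intro mult_nonneg_nonneg zero_le_power) auto
  have f8: "0 \<le> (149/32::real)*a^2*u" using h by (intro mult_nonneg_nonneg zero_le_power) auto
  have f9: "0 \<le> (0::real)*a^2*v" using h by (intro mult_nonneg_nonneg zero_le_power) auto
  have f10: "0 \<le> (0::real)*(1-a)^2*w" using h by (intro mult_nonneg_nonneg zero_le_power) auto
  have f11: "0 \<le> (0::real)*(1-a)^2*z" using h by (intro mult_nonneg_nonneg zero_le_power) auto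
  have f12: "0 \<le> 3*a^2*(u + ((185/32::real) - 4*a - (149/32::real))/6)^2" by simp
  have f13: "0 \<le> 3*a^2*(v + ((185/32::real) + (21/16::real) - 12*(1-a) - (0::real))/6)^2" by simp
  have f14: "0 \<le> 3*(1-a)^2*(w + ((55/32::real) + (21/16::real) - 12*a - (0::real))/6)^2" by simp
  have f15: "0 \<le> 3*(1-a)^2*(z + ((55/32::real) - 4*(1-a) - (0::real))/6)^2" by simp
  have t3: "(21/16::real)*eta \<le> 4*eta" using h by auto
  show ?thesis using id t3 f0 f1 f2 f3 f4 f5 f6 f7 f8 f9 f10 f11 f12 f13 f14 f15 by linarith
qed

lemma RL3:
  fixes a u v w z eta DD :: real
  assumes DD: "DD = 51/200" and h: "(5/16::real) \<le> a" "a \<le> (3/8::real)" "0 \<le> u" "0 \<le> v" "0 \<le> w" "0 \<le> z"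
    "u + v \<le> DD" "w + z \<le> DD" "a^2*v + (1-a)^2*w \<le> a*(1-a)*DD + eta" "0 \<le> eta"
  shows "Sf a u v w z \<ge> 1/1000 - 4*eta"
proof -
  have id: "Sf a u v w z - 1/1000 = (4539179/6000::real)*(a-(5/16::real))^0*((3/8::real)-a)^4 + (11729053/3000::real)*(a-(5/16::real))^1*((3/8::real)-a)^3 + (33979919/6000::real)*(a-(5/16::real))^2*((3/8::real)-a)^2 + (1381353/500::real)*(a-(5/16::real))^3*((3/8::real)-a)^1 + (116937/500::real)*(a-(5/16::real))^4*((3/8::real)-a)^0 + (131/32::real)*a^2*(DD-u-v) + (47/32::real)*(1-a)^2*(DD-w-z) + (73/32::real)*(a*(1-a)*DD + eta - a^2*v - (1-a)^2*w) + (87/32::real)*a^2*u + (0::real)*a^2*v + (0::real)*(1-a)^2*w + (0::real)*(1-a)^2*z + 3*a^2*(u + ((131/32::real) - 4*a - (87/32::real))/6)^2 + 3*a^2*(v + ((131/32::real) + (73/32::real) - 12*(1-a) - (0::real))/6)^2 + 3*(1-a)^2*(w + ((47/32::real) + (73/32::real) - 12*a - (0::real))/6)^2 + 3*(1-a)^2*(z + ((47/32::real) - 4*(1-a) - (0::real))/6)^2 - (73/32::real)*eta"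
    unfolding Sf_def DD by (simp add: field_simps power_numeral_reduce)
  have f0: "0 \<le> (4539179/6000::real)*(a-(5/16::real))^0*((3/8::real)-a)^4" using h by (intro mult_nonneg_nonneg zero_le_power) auto
  have f1: "0 \<le> (11729053/3000::real)*(a-(5/16::real))^1*((3/8::real)-a)^3" using h by (intro mult_nonneg_nonneg zero_le_power) auto
  have f2: "0 \<le> (33979919/6000::real)*(a-(5/16::real))^2*((3/8::real)-a)^2" using h by (intro mult_nonneg_nonneg zero_le_power) auto
  have f3: "0 \<le> (1381353/500::real)*(a-(5/16::real))^3*((3/8::real)-a)^1" using h by (intro mult_nonneg_nonneg zero_le_power) auto
  have f4: "0 \<le> (116937/500::real)*(a-(5/16::real))^4*((3/8::real)-a)^0" using h by (intro mult_nonneg_nonneg zero_le_power) auto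
  have f5: "0 \<le> (131/32::real)*a^2*(DD-u-v)" using h by (intro mult_nonneg_nonneg zero_le_power) auto
  have f6: "0 \<le> (47/32::real)*(1-a)^2*(DD-w-z)" using h by (intro mult_nonneg_nonneg zero_le_power) auto
  have f7: "0 \<le> (73/32::real)*(a*(1-a)*DD + eta - a^2*v - (1-a)^2*w)" using h by (intro mult_nonneg_nonneg zero_le_power) auto
  have f8: "0 \<le> (87/32::real)*a^2*u" using h by (intro mult_nonneg_nonneg zero_le_power) auto
  have f9: "0 \<le> (0::real)*a^2*v" using h by (intro mult_nonneg_nonneg zero_le_power) auto
  have f10: "0 \<le> (0::real)*(1-a)^2*w" using h by (intro mult_nonneg_nonneg zero_le_power) auto
  have f11: "0 \<le> (0::real)*(1-a)^2*z" using h by (intro mult_nonneg_nonneg zero_le_power) auto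
  have f12: "0 \<le> 3*a^2*(u + ((131/32::real) - 4*a - (87/32::real))/6)^2" by simp
  have f13: "0 \<le> 3*a^2*(v + ((131/32::real) + (73/32::real) - 12*(1-a) - (0::real))/6)^2" by simp
  have f14: "0 \<le> 3*(1-a)^2*(w + ((47/32::real) + (73/32::real) - 12*a - (0::real))/6)^2" by simp
  have f15: "0 \<le> 3*(1-a)^2*(z + ((47/32::real) - 4*(1-a) - (0::real))/6)^2" by simp
  have t3: "(73/32::real)*eta \<le> 4*eta" using h by auto
  show ?thesis using id t3 f0 f1 f2 f3 f4 f5 f6 f7 f8 f9 f10 f11 f12 f13 f14 f15 by linarith
qed

lemma RL4:
  fixes a u v w z eta DD :: real
  assumes DD: "DD = 51/200" and h: "(3/8::real) \<le> a" "a \<le> (7/16::real)" "0 \<le> u" "0 \<le> v" "0 \<le> w" "0 \<le> z"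
    "u + v \<le> DD" "w + z \<le> DD" "a^2*v + (1-a)^2*w \<le> a*(1-a)*DD + eta" "0 \<le> eta"
  shows "Sf a u v w z \<ge> 1/1000 - 4*eta"
proof -
  have id: "Sf a u v w z - 1/1000 = (238411/1500::real)*(a-(3/8::real))^0*((7/16::real)-a)^4 + (4435829/1500::real)*(a-(3/8::real))^1*((7/16::real)-a)^3 + (39647719/6000::real)*(a-(3/8::real))^2*((7/16::real)-a)^2 + (5101011/1000::real)*(a-(3/8::real))^3*((7/16::real)-a)^1 + (7636019/6000::real)*(a-(3/8::real))^4*((7/16::real)-a)^0 + (71/32::real)*a^2*(DD-u-v) + (19/16::real)*(1-a)^2*(DD-w-z) + (27/8::real)*(a*(1-a)*DD + eta - a^2*v - (1-a)^2*w) + (19/32::real)*a^2*u + (0::real)*a^2*v + (0::real)*(1-a)^2*w + (0::real)*(1-a)^2*z + 3*a^2*(u + ((71/32::real) - 4*a - (19/32::real))/6)^2 + 3*a^2*(v + ((71/32::real) + (27/8::real) - 12*(1-a) - (0::real))/6)^2 + 3*(1-a)^2*(w + ((19/16::real) + (27/8::real) - 12*a - (0::real))/6)^2 + 3*(1-a)^2*(z + ((19/16::real) - 4*(1-a) - (0::real))/6)^2 - (27/8::real)*eta"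
    unfolding Sf_def DD by (simp add: field_simps power_numeral_reduce)
  have f0: "0 \<le> (238411/1500::real)*(a-(3/8::real))^0*((7/16::real)-a)^4" using h by (intro mult_nonneg_nonneg zero_le_power) auto
  have f1: "0 \<le> (4435829/1500::real)*(a-(3/8::real))^1*((7/16::real)-a)^3" using h by (intro mult_nonneg_nonneg zero_le_power) auto
  have f2: "0 \<le> (39647719/6000::real)*(a-(3/8::real))^2*((7/16::real)-a)^2" using h by (intro mult_nonneg_nonneg zero_le_power) auto
  have f3: "0 \<le> (5101011/1000::real)*(a-(3/8::real))^3*((7/16::real)-a)^1" using h by (intro mult_nonneg_nonneg zero_le_power) auto
  have f4: "0 \<le> (7636019/6000::real)*(a-(3/8::real))^4*((7/16::real)-a)^0" using h by (intro mult_nonneg_nonneg zero_le_power) auto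
  have f5: "0 \<le> (71/32::real)*a^2*(DD-u-v)" using h by (intro mult_nonneg_nonneg zero_le_power) auto
  have f6: "0 \<le> (19/16::real)*(1-a)^2*(DD-w-z)" using h by (intro mult_nonneg_nonneg zero_le_power) auto
  have f7: "0 \<le> (27/8::real)*(a*(1-a)*DD + eta - a^2*v - (1-a)^2*w)" using h by (intro mult_nonneg_nonneg zero_le_power) auto
  have f8: "0 \<le> (19/32::real)*a^2*u" using h by (intro mult_nonneg_nonneg zero_le_power) auto
  have f9: "0 \<le> (0::real)*a^2*v" using h by (intro mult_nonneg_nonneg zero_le_power) auto
  have f10: "0 \<le> (0::real)*(1-a)^2*w" using h by (intro mult_nonneg_nonneg zero_le_power) auto
  have f11: "0 \<le> (0::real)*(1-a)^2*z" using h by (intro mult_nonneg_nonneg zero_le_power) auto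
  have f12: "0 \<le> 3*a^2*(u + ((71/32::real) - 4*a - (19/32::real))/6)^2" by simp
  have f13: "0 \<le> 3*a^2*(v + ((71/32::real) + (27/8::real) - 12*(1-a) - (0::real))/6)^2" by simp
  have f14: "0 \<le> 3*(1-a)^2*(w + ((19/16::real) + (27/8::real) - 12*a - (0::real))/6)^2" by simp
  have f15: "0 \<le> 3*(1-a)^2*(z + ((19/16::real) - 4*(1-a) - (0::real))/6)^2" by simp
  have t3: "(27/8::real)*eta \<le> 4*eta" using h by auto
  show ?thesis using id t3 f0 f1 f2 f3 f4 f5 f6 f7 f8 f9 f10 f11 f12 f13 f14 f15 by linarith
qed

lemma RL5:
  fixes a u v w z eta DD :: real
  assumes DD: "DD = 51/200" and h: "(7/16::real) \<le> a" "a \<le> (1/2::real)" "0 \<le> u" "0 \<le> v" "0 \<le> w" "0 \<le> z"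
    "u + v \<le> DD" "w + z \<le> DD" "a^2*v + (1-a)^2*w \<le> a*(1-a)*DD + eta" "0 \<le> eta"
  shows "Sf a u v w z \<ge> 1/1000 - 4*eta"
proof -
  have id: "Sf a u v w z - 1/1000 = (1211423/750::real)*(a-(7/16::real))^0*((1/2::real)-a)^4 + (1045557/125::real)*(a-(7/16::real))^1*((1/2::real)-a)^3 + (10661743/750::real)*(a-(7/16::real))^2*((1/2::real)-a)^2 + (3700576/375::real)*(a-(7/16::real))^3*((1/2::real)-a)^1 + (297888/125::real)*(a-(7/16::real))^4*((1/2::real)-a)^0 + (11/8::real)*a^2*(DD-u-v) + (9/8::real)*(1-a)^2*(DD-w-z) + (63/16::real)*(a*(1-a)*DD + eta - a^2*v - (1-a)^2*w) + (0::real)*a^2*u + (0::real)*a^2*v + (0::real)*(1-a)^2*w + (0::real)*(1-a)^2*z + 3*a^2*(u + ((11/8::real) - 4*a - (0::real))/6)^2 + 3*a^2*(v + ((11/8::real) + (63/16::real) - 12*(1-a) - (0::real))/6)^2 + 3*(1-a)^2*(w + ((9/8::real) + (63/16::real) - 12*a - (0::real))/6)^2 + 3*(1-a)^2*(z + ((9/8::real) - 4*(1-a) - (0::real))/6)^2 - (63/16::real)*eta"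
    unfolding Sf_def DD by (simp add: field_simps power_numeral_reduce)
  have f0: "0 \<le> (1211423/750::real)*(a-(7/16::real))^0*((1/2::real)-a)^4" using h by (intro mult_nonneg_nonneg zero_le_power) auto
  have f1: "0 \<le> (1045557/125::real)*(a-(7/16::real))^1*((1/2::real)-a)^3" using h by (intro mult_nonneg_nonneg zero_le_power) auto
  have f2: "0 \<le> (10661743/750::real)*(a-(7/16::real))^2*((1/2::real)-a)^2" using h by (intro mult_nonneg_nonneg zero_le_power) auto
  have f3: "0 \<le> (3700576/375::real)*(a-(7/16::real))^3*((1/2::real)-a)^1" using h by (intro mult_nonneg_nonneg zero_le_power) auto
  have f4: "0 \<le> (297888/125::real)*(a-(7/16::real))^4*((1/2::real)-a)^0" using h by (intro mult_nonneg_nonneg zero_le_power) auto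
  have f5: "0 \<le> (11/8::real)*a^2*(DD-u-v)" using h by (intro mult_nonneg_nonneg zero_le_power) auto
  have f6: "0 \<le> (9/8::real)*(1-a)^2*(DD-w-z)" using h by (intro mult_nonneg_nonneg zero_le_power) auto
  have f7: "0 \<le> (63/16::real)*(a*(1-a)*DD + eta - a^2*v - (1-a)^2*w)" using h by (intro mult_nonneg_nonneg zero_le_power) auto
  have f8: "0 \<le> (0::real)*a^2*u" using h by (intro mult_nonneg_nonneg zero_le_power) auto
  have f9: "0 \<le> (0::real)*a^2*v" using h by (intro mult_nonneg_nonneg zero_le_power) auto
  have f10: "0 \<le> (0::real)*(1-a)^2*w" using h by (intro mult_nonneg_nonneg zero_le_power) auto
  have f11: "0 \<le> (0::real)*(1-a)^2*z" using h by (intro mult_nonneg_nonneg zero_le_power) auto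
  have f12: "0 \<le> 3*a^2*(u + ((11/8::real) - 4*a - (0::real))/6)^2" by simp
  have f13: "0 \<le> 3*a^2*(v + ((11/8::real) + (63/16::real) - 12*(1-a) - (0::real))/6)^2" by simp
  have f14: "0 \<le> 3*(1-a)^2*(w + ((9/8::real) + (63/16::real) - 12*a - (0::real))/6)^2" by simp
  have f15: "0 \<le> 3*(1-a)^2*(z + ((9/8::real) - 4*(1-a) - (0::real))/6)^2" by simp
  have t3: "(63/16::real)*eta \<le> 4*eta" using h by auto
  show ?thesis using id t3 f0 f1 f2 f3 f4 f5 f6 f7 f8 f9 f10 f11 f12 f13 f14 f15 by linarith
qed

lemma RL_half:
  fixes a u v w z eta :: real
  assumes h: "0 \<le> a" "a \<le> 1/2" "0 \<le> u" "0 \<le> v" "0 \<le> w" "0 \<le> z"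
    "u + v \<le> 51/200" "w + z \<le> 51/200" "a^2*v + (1-a)^2*w \<le> a*(1-a)*(51/200) + eta" "0 \<le> eta"
  shows "Sf a u v w z \<ge> 1/1000 - 4*eta"
proof -
  consider "a \<le> 1/8" | "1/8 \<le> a \<and> a \<le> 1/4" | "1/4 \<le> a \<and> a \<le> 5/16" | "5/16 \<le> a \<and> a \<le> 3/8"
    | "3/8 \<le> a \<and> a \<le> 7/16" | "7/16 \<le> a" by linarith
  then show ?thesis
  proof cases
    case 1 then show ?thesis using RL0[of "51/200" a u v w z eta] h by auto
  next
    case 2 then show ?thesis using RL1[of "51/200" a u v w z eta] h by auto
  next
    case 3 then show ?thesis using RL2[of "51/200" a u v w z eta] h by auto
  next
    case 4 then show ?thesis using RL3[of "51/200" a u v w z eta] h by auto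
  next
    case 5 then show ?thesis using RL4[of "51/200" a u v w z eta] h by auto
  next
    case 6 then show ?thesis using RL5[of "51/200" a u v w z eta] h by auto
  qed
qed

lemma Sf_sym: "Sf (1-a) z w v u = Sf a u v w z"
  unfolding Sf_def by (simp add: algebra_simps)

lemma RL_all:
  fixes a u v w z eta :: real
  assumes h: "0 \<le> a" "a \<le> 1" "0 \<le> u" "0 \<le> v" "0 \<le> w" "0 \<le> z"
    "u + v \<le> 51/200" "w + z \<le> 51/200" "a^2*v + (1-a)^2*w \<le> a*(1-a)*(51/200) + eta" "0 \<le> eta"
  shows "Sf a u v w z \<ge> 1/1000 - 4*eta"
proof (cases "a \<le> 1/2")
  case True then show ?thesis using RL_half h by auto
next
  case False
  have "Sf (1-a) z w v u \<ge> 1/1000 - 4*eta"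
    by (rule RL_half) (use h False in \<open>auto simp: algebra_simps\<close>)
  then show ?thesis by (simp add: Sf_sym)
qed


lemma avg_facts:
  fixes N S T nn D :: real
  assumes "N \<ge> 0" "S \<ge> 0" "T \<ge> 0" "S + T \<le> N * (D * nn)" "nn > 0" "D \<ge> 0"
  shows "S = N * nn * (S / (N * nn))" "T = N * nn * (T / (N * nn))"
    "S / (N * nn) + T / (N * nn) \<le> D" "S / (N*nn) \<ge> 0" "T / (N*nn) \<ge> 0"
    "S^2 / N = N * nn^2 * (S / (N*nn))^2" "T^2 / N = N * nn^2 * (T / (N*nn))^2"
proof -
  show "S / (N*nn) \<ge> 0" "T / (N*nn) \<ge> 0" using assms by auto
  have "S = N * nn * (S / (N * nn)) \<and> T = N * nn * (T / (N * nn)) \<and>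
    S / (N * nn) + T / (N * nn) \<le> D \<and> S^2 / N = N * nn^2 * (S / (N*nn))^2 \<and> T^2 / N = N * nn^2 * (T / (N*nn))^2"
  proof (cases "N = 0")
    case True
    then have "S + T \<le> 0" using assms(4) by simp
    then have "S = 0" "T = 0" using assms(2,3) by auto
    then show ?thesis using True assms(6) by simp
  next
    case False
    then have Np: "N > 0" using assms(1) by simp
    have Nn: "N * nn > 0" using Np assms(5) by simp
    have e1: "S = N * nn * (S / (N * nn))" "T = N * nn * (T / (N * nn))" using Nn by auto
    have "S / (N * nn) + T / (N * nn) = (S + T) / (N * nn)" by (simp add: add_divide_distrib)
    also have "\<dots> \<le> N * (D * nn) / (N * nn)" using assms(4) Nn by (intro divide_right_mono) auto
    also have "\<dots> = D" using Np assms(5) by simp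
    finally have e2: "S / (N * nn) + T / (N * nn) \<le> D" .
    have e3: "S^2 / N = N * nn^2 * (S / (N*nn))^2" "T^2 / N = N * nn^2 * (T / (N*nn))^2"
      using Np assms(5) by (simp_all add: power2_eq_square)
    show ?thesis using e1 e2 e3 by blast
  qed
  then show "S = N * nn * (S / (N * nn))" "T = N * nn * (T / (N * nn))"
    "S / (N * nn) + T / (N * nn) \<le> D"
    "S^2 / N = N * nn^2 * (S / (N*nn))^2" "T^2 / N = N * nn^2 * (T / (N*nn))^2" by auto
qed
lemma FinalReal:
  fixes a b nn N1 N2 P1 Q R P2 :: real
  assumes ab: "a \<ge> 0" "b \<ge> 0" "nn = a + b" "nn \<ge> 1"
    and N: "N1 = a*(a-1)" "N2 = b*(b-1)" "N1 \<ge> 0" "N2 \<ge> 0"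
    and P: "P1 \<ge> 0" "Q \<ge> 0" "R \<ge> 0" "P2 \<ge> 0"
    and c1: "P1 + Q \<le> N1 * (51/200 * nn)" and c2: "Q + R \<le> a * b * (51/200 * nn)"
    and c3: "R + P2 \<le> N2 * (51/200 * nn)"
  shows "N1*(a^2+b^2) - 4*a*P1 - 4*b*Q + 3*P1^2/N1 + 3*Q^2/N1 + 2*(a*b*(2*a*b) - 4*b*Q - 4*a*R)
       + N2*(a^2+b^2) - 4*a*R - 4*b*P2 + 3*R^2/N2 + 3*P2^2/N2 \<ge> nn^4/1000 - 5*nn^3"
proof -
  define D :: real where "D = 51/200"
  have nn0: "nn > 0" using ab by auto
  define u where "u = P1 / (N1 * nn)"
  define v where "v = Q / (N1 * nn)"
  define w where "w = R / (N2 * nn)"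
  define z where "z = P2 / (N2 * nn)"
  have d0: "(51/200::real) \<ge> 0" by simp
  note A1 = avg_facts[OF N(3) P(1) P(2) c1 nn0 d0, folded u_def v_def]
  note A2 = avg_facts[OF N(4) P(3) P(4) c3 nn0 d0, folded w_def z_def]
  have uv: "u + v \<le> D" "w + z \<le> D" using A1 A2 D_def by auto
  have pos: "u \<ge> 0" "v \<ge> 0" "w \<ge> 0" "z \<ge> 0" using A1 A2 by auto
  define ah where "ah = a / nn"
  have a_eq: "a = ah * nn" using nn0 ah_def by simp
  have b_eq: "b = (1 - ah) * nn" using nn0 ah_def ab by (simp add: field_simps)
  have ah01: "0 \<le> ah" "ah \<le> 1" using ab nn0 ah_def by auto
  have "N1 * nn * v + N2 * nn * w \<le> a * b * (D * nn)" using c2 A1(2) A2(1) unfolding D_def by simp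
  then have "(N1 * v + N2 * w) * nn \<le> (a * b * D) * nn" by (simp add: algebra_simps)
  then have abc: "N1 * v + N2 * w \<le> a * b * D" using nn0 by simp
  have vD: "v \<le> D" "w \<le> D" using uv pos by auto
  have "a * v + b * w \<le> a * D + b * D"
    using vD ab by (intro add_mono mult_left_mono) auto
  then have "a^2 * v + b^2 * w \<le> a * b * D + nn * D"
    using abc N ab by (simp add: algebra_simps power2_eq_square)
  then have "(ah^2 * v + (1-ah)^2 * w) * nn^2 \<le> (ah * (1-ah) * D + D / nn) * nn^2"
    unfolding a_eq b_eq using nn0 by (simp add: algebra_simps power2_eq_square)
  then have abn0: "ah^2 * v + (1-ah)^2 * w \<le> ah * (1-ah) * D + D / nn"
    using nn0 by (simp add: mult_le_cancel_right)
  then have abn: "ah^2 * v + (1-ah)^2 * w \<le> ah * (1-ah) * (51/200) + D / nn"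
    unfolding D_def by simp
  have Sge: "Sf ah u v w z \<ge> 1/1000 - 4 * (D / nn)"
  proof -
    have uv': "u + v \<le> 51/200" "w + z \<le> 51/200" using uv unfolding D_def .
    have e0: "0 \<le> D / nn" using nn0 unfolding D_def by simp
    show ?thesis by (rule RL_all[OF ah01 pos uv' abn e0])
  qed
  define YA where "YA = a^2+b^2 - 4*a*nn*u - 12*b*nn*v + 3*nn^2*(u^2+v^2)"
  define YB where "YB = a^2+b^2 - 12*a*nn*w - 4*b*nn*z + 3*nn^2*(w^2+z^2)"
  have lhs: "N1*(a^2+b^2) - 4*a*P1 - 4*b*Q + 3*P1^2/N1 + 3*Q^2/N1 + 2*(a*b*(2*a*b) - 4*b*Q - 4*a*R)
       + N2*(a^2+b^2) - 4*a*R - 4*b*P2 + 3*R^2/N2 + 3*P2^2/N2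
       = N1 * YA + 4*a^2*b^2 + N2 * YB"
  proof -
    have e1: "3*P1^2/N1 = 3*(N1 * nn^2 * u^2)" using A1(6) by simp
    have e2: "3*Q^2/N1 = 3*(N1 * nn^2 * v^2)" using A1(7) by simp
    have e3: "3*R^2/N2 = 3*(N2 * nn^2 * w^2)" using A2(6) by simp
    have e4: "3*P2^2/N2 = 3*(N2 * nn^2 * z^2)" using A2(7) by simp
    show ?thesis unfolding e1 e2 e3 e4 YA_def YB_def
      by (simp add: A1(1) A1(2) A2(1) A2(2) algebra_simps power2_eq_square)
  qed
  have main: "a^2 * YA + 4*a^2*b^2 + b^2 * YB = nn^4 * Sf ah u v w z"
    unfolding YA_def YB_def Sf_def a_eq b_eq by algebra
  have YAb: "a * YA \<le> a * (2 * nn^2)"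
  proof -
    have "u^2 + v^2 \<le> (u+v)^2" using pos by (simp add: power2_eq_square algebra_simps)
    also have "\<dots> \<le> D^2" using uv pos by (intro power_mono) auto
    finally have "u^2+v^2 \<le> D^2" .
    then have "3*nn^2*(u^2+v^2) \<le> 3*nn^2*D^2" by (intro mult_left_mono) auto
    moreover have "a^2+b^2 \<le> nn^2" using ab by (simp add: power2_eq_square algebra_simps)
    moreover have "0 \<le> 4*a*nn*u + 12*b*nn*v" using ab pos nn0 by simp
    ultimately have "YA \<le> nn^2 + 3*nn^2*D^2" unfolding YA_def by linarith
    also have "\<dots> \<le> 2 * nn^2" unfolding D_def by (simp add: power2_eq_square)
    finally show ?thesis using ab by (intro mult_left_mono) auto
  qed
  have YBb: "b * YB \<le> b * (2 * nn^2)"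
  proof -
    have "w^2 + z^2 \<le> (w+z)^2" using pos by (simp add: power2_eq_square algebra_simps)
    also have "\<dots> \<le> D^2" using uv pos by (intro power_mono) auto
    finally have "w^2+z^2 \<le> D^2" .
    then have "3*nn^2*(w^2+z^2) \<le> 3*nn^2*D^2" by (intro mult_left_mono) auto
    moreover have "a^2+b^2 \<le> nn^2" using ab by (simp add: power2_eq_square algebra_simps)
    moreover have "0 \<le> 12*a*nn*w + 4*b*nn*z" using ab pos nn0 by simp
    ultimately have "YB \<le> nn^2 + 3*nn^2*D^2" unfolding YB_def by linarith
    also have "\<dots> \<le> 2 * nn^2" unfolding D_def by (simp add: power2_eq_square)
    finally show ?thesis using ab by (intro mult_left_mono) auto
  qed
  have split: "N1 * YA + 4*a^2*b^2 + N2 * YB = (a^2 * YA + 4*a^2*b^2 + b^2 * YB) - a * YA - b * YB"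
    unfolding N(1) N(2) by algebra
  have "nn^4 * Sf ah u v w z \<ge> nn^4 * (1/1000 - 4 * (D / nn))"
    using Sge by (intro mult_left_mono) auto
  moreover have "nn^4 * (1/1000 - 4 * (D / nn)) = nn^4/1000 - 4*D*nn^3"
    using nn0 by (simp add: field_simps power3_eq_cube power4_eq_xxxx)
  moreover have "a * (2*nn^2) + b * (2*nn^2) = 2 * nn^3" using ab by (simp add: power3_eq_cube power2_eq_square algebra_simps)
  moreover have "4*D*nn^3 \<le> 3 * nn^3" unfolding D_def using nn0 by simp
  ultimately show ?thesis using lhs main split YAb YBb by linarith
qed


lemma sq_div_le:
  fixes f :: "'b \<Rightarrow> real"
  assumes "finite I"
  shows "(\<Sum>i\<in>I. f i)^2 / real (card I) \<le> (\<Sum>i\<in>I. (f i)^2)"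
proof (cases "card I = 0")
  case True then show ?thesis by (simp add: sum_nonneg)
next
  case False
  then show ?thesis using sq_sum_ge[OF assms, of f] by (simp add: divide_le_eq mult.commute)
qed

lemma classF1:
  fixes al be :: "'p \<Rightarrow> real" and a b :: real
  assumes "finite P"
  shows "(\<Sum>p\<in>P. (a - al p)*(a - 3*al p) + (b - be p)*(b - 3*be p)) \<ge>
    real (card P)*(a^2+b^2) - 4*a*(\<Sum>p\<in>P. al p) - 4*b*(\<Sum>p\<in>P. be p)
    + 3*(\<Sum>p\<in>P. al p)^2/real (card P) + 3*(\<Sum>p\<in>P. be p)^2/real (card P)"
proof -
  have "(\<Sum>p\<in>P. (a - al p)*(a - 3*al p) + (b - be p)*(b - 3*be p))
      = (\<Sum>p\<in>P. (a^2+b^2) - (4*a)*al p - (4*b)*be p + 3*(al p)^2 + 3*(be p)^2)"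
    by (rule sum.cong) (auto simp: power2_eq_square algebra_simps)
  also have "\<dots> = real (card P)*(a^2+b^2) - 4*a*(\<Sum>p\<in>P. al p) - 4*b*(\<Sum>p\<in>P. be p)
      + 3*(\<Sum>p\<in>P. (al p)^2) + 3*(\<Sum>p\<in>P. (be p)^2)"
    by (simp add: sum.distrib sum_subtractf sum_distrib_left)
  moreover have "3*(\<Sum>p\<in>P. al p)^2/real (card P) \<le> 3*(\<Sum>p\<in>P. (al p)^2)"
    using sq_div_le[OF assms, of al] by simp
  moreover have "3*(\<Sum>p\<in>P. be p)^2/real (card P) \<le> 3*(\<Sum>p\<in>P. (be p)^2)"
    using sq_div_le[OF assms, of be] by simp
  ultimately show ?thesis by linarith
qed

lemma classF2:
  fixes al be :: "'p \<Rightarrow> real" and a b :: real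
  assumes "finite P" "\<And>p. p \<in> P \<Longrightarrow> al p \<ge> 0 \<and> be p \<ge> 0"
  shows "(\<Sum>p\<in>P. (a - al p)*(b - 3*be p) + (b - be p)*(a - 3*al p)) \<ge>
    real (card P)*(2*a*b) - 4*b*(\<Sum>p\<in>P. al p) - 4*a*(\<Sum>p\<in>P. be p)"
proof -
  have "(\<Sum>p\<in>P. (a - al p)*(b - 3*be p) + (b - be p)*(a - 3*al p))
      = (\<Sum>p\<in>P. (2*a*b) - (4*b)*al p - (4*a)*be p + 6*(al p * be p))"
    by (rule sum.cong) (auto simp: algebra_simps)
  also have "\<dots> = real (card P)*(2*a*b) - 4*b*(\<Sum>p\<in>P. al p) - 4*a*(\<Sum>p\<in>P. be p)
      + 6*(\<Sum>p\<in>P. al p * be p)"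
    by (simp add: sum.distrib sum_subtractf sum_distrib_left)
  moreover have "0 \<le> (\<Sum>p\<in>P. al p * be p)" using assms(2) by (intro sum_nonneg) auto
  ultimately show ?thesis by linarith
qed

context kset begin

definition "PAA = (SIGMA x:A. A - {x})"
definition "PAB = A \<times> B"
definition "PBB = (SIGMA x:B. B - {x})"

definition al :: "nat \<times> nat \<Rightarrow> real" where "al p = bad A (fst p) (snd p)"
definition be :: "nat \<times> nat \<Rightarrow> real" where "be p = bad B (fst p) (snd p)"

lemma finP: "finite PAA" "finite PAB" "finite PBB"
  unfolding PAA_def PAB_def PBB_def using finA finB by auto

lemma cardP: "real (card PAA) = real (card A) * (real (card A) - 1)"
  "real (card PAB) = real (card A) * real (card B)"
  "real (card PBB) = real (card B) * (real (card B) - 1)"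
proof -
  have "card PAA = (\<Sum>x\<in>A. card (A - {x}))" unfolding PAA_def using finA by simp
  also have "\<dots> = (\<Sum>x\<in>A. card A - 1)" by (rule sum.cong) (auto simp: card_Diff_singleton finA)
  finally show "real (card PAA) = real (card A) * (real (card A) - 1)"
    by (cases "card A") (auto simp: algebra_simps)
  have "card PBB = (\<Sum>x\<in>B. card (B - {x}))" unfolding PBB_def using finB by simp
  also have "\<dots> = (\<Sum>x\<in>B. card B - 1)" by (rule sum.cong) (auto simp: card_Diff_singleton finB)
  finally show "real (card PBB) = real (card B) * (real (card B) - 1)"
    by (cases "card B") (auto simp: algebra_simps)
  show "real (card PAB) = real (card A) * real (card B)" unfolding PAB_def by (simp add: card_cartesian_product)
qed

lemma bad_nonneg: "0 \<le> bad X x y" unfolding bad_def by simp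

lemma bad_ind: "finite X \<Longrightarrow> bad X x y = (\<Sum>v\<in>X. if v \<noteq> x \<and> v \<noteq> y \<and> {x,y,v} \<notin> G then 1 else 0)"
  unfolding bad_def by (simp add: sum.inter_filter[symmetric])

lemma pair_split:
  "(\<Sum>x\<in>V. \<Sum>y\<in>V-{x}. Psi x y) =
     (\<Sum>p\<in>PAA. (real (card A) - al p)*(real (card A) - 3*al p) + (real (card B) - be p)*(real (card B) - 3*be p))
   + 2 * (\<Sum>p\<in>PAB. (real (card A) - al p)*(real (card B) - 3*be p) + (real (card B) - be p)*(real (card A) - 3*al p))
   + (\<Sum>p\<in>PBB. (real (card A) - al p)*(real (card A) - 3*al p) + (real (card B) - be p)*(real (card B) - 3*be p))"
proof -
  let ?a = "real (card A)" and ?b = "real (card B)"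
  define F1 where "F1 x y = (?a - bad A x y)*(?a - 3*bad A x y) + (?b - bad B x y)*(?b - 3*bad B x y)" for x y
  define F2 where "F2 x y = (?a - bad A x y)*(?b - 3*bad B x y) + (?b - bad B x y)*(?a - 3*bad A x y)" for x y
  have F2s: "F2 x y = F2 y x" for x y unfolding F2_def using bad_sym by simp
  have xA: "(\<Sum>y\<in>V-{x}. Psi x y) = (\<Sum>y\<in>A-{x}. F1 x y) + (\<Sum>y\<in>B. F2 x y)" if "x \<in> A" for x
  proof -
    have "V - {x} = (A - {x}) \<union> B" using AB ABd that by auto
    then have "(\<Sum>y\<in>V-{x}. Psi x y) = (\<Sum>y\<in>A-{x}. Psi x y) + (\<Sum>y\<in>B. Psi x y)"
      using finA finB ABd by (simp add: sum.union_disjoint Diff_Int_distrib2)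
    moreover have "(\<Sum>y\<in>A-{x}. Psi x y) = (\<Sum>y\<in>A-{x}. F1 x y)"
      by (rule sum.cong) (use that in \<open>auto simp: Psi_def F1_def Let_def\<close>)
    moreover have "(\<Sum>y\<in>B. Psi x y) = (\<Sum>y\<in>B. F2 x y)"
      by (rule sum.cong) (use that ABd in \<open>auto simp: Psi_def F2_def Let_def\<close>)
    ultimately show ?thesis by simp
  qed
  have xB: "(\<Sum>y\<in>V-{x}. Psi x y) = (\<Sum>y\<in>A. F2 x y) + (\<Sum>y\<in>B-{x}. F1 x y)" if "x \<in> B" for x
  proof -
    have "V - {x} = A \<union> (B - {x})" using AB ABd that by auto
    then have "(\<Sum>y\<in>V-{x}. Psi x y) = (\<Sum>y\<in>A. Psi x y) + (\<Sum>y\<in>B-{x}. Psi x y)"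
    proof -
      have d: "A \<inter> (B - {x}) = {}" using ABd by auto
      have f: "finite (B - {x})" using finB by simp
      show ?thesis using \<open>V - {x} = A \<union> (B - {x})\<close> sum.union_disjoint[OF finA f d, of "Psi x"] by simp
    qed
    moreover have "(\<Sum>y\<in>B-{x}. Psi x y) = (\<Sum>y\<in>B-{x}. F1 x y)"
      by (rule sum.cong) (use that ABd in \<open>auto simp: Psi_def F1_def Let_def\<close>)
    moreover have "(\<Sum>y\<in>A. Psi x y) = (\<Sum>y\<in>A. F2 x y)"
      by (rule sum.cong) (use that ABd in \<open>auto simp: Psi_def F2_def Let_def\<close>)
    ultimately show ?thesis by simp
  qed
  have "(\<Sum>x\<in>V. \<Sum>y\<in>V-{x}. Psi x y) = (\<Sum>x\<in>A. \<Sum>y\<in>V-{x}. Psi x y) + (\<Sum>x\<in>B. \<Sum>y\<in>V-{x}. Psi x y)"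
    using sum.union_disjoint[OF finA finB ABd] AB by simp
  also have "\<dots> = ((\<Sum>x\<in>A. \<Sum>y\<in>A-{x}. F1 x y) + (\<Sum>x\<in>A. \<Sum>y\<in>B. F2 x y))
     + ((\<Sum>x\<in>B. \<Sum>y\<in>A. F2 x y) + (\<Sum>x\<in>B. \<Sum>y\<in>B-{x}. F1 x y))"
    by (simp add: xA xB sum.distrib)
  also have "(\<Sum>x\<in>B. \<Sum>y\<in>A. F2 x y) = (\<Sum>x\<in>A. \<Sum>y\<in>B. F2 x y)"
    by (subst sum.swap) (simp add: F2s)
  finally have e: "(\<Sum>x\<in>V. \<Sum>y\<in>V-{x}. Psi x y) = (\<Sum>x\<in>A. \<Sum>y\<in>A-{x}. F1 x y) + 2 * (\<Sum>x\<in>A. \<Sum>y\<in>B. F2 x y) + (\<Sum>x\<in>B. \<Sum>y\<in>B-{x}. F1 x y)"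
    by simp
  have s1: "(\<Sum>x\<in>A. \<Sum>y\<in>A-{x}. F1 x y) = (\<Sum>p\<in>PAA. F1 (fst p) (snd p))"
    unfolding PAA_def using finA by (simp add: sum.Sigma split_beta)
  have s2: "(\<Sum>x\<in>A. \<Sum>y\<in>B. F2 x y) = (\<Sum>p\<in>PAB. F2 (fst p) (snd p))"
    unfolding PAB_def using finA finB by (simp add: sum.cartesian_product split_beta)
  have s3: "(\<Sum>x\<in>B. \<Sum>y\<in>B-{x}. F1 x y) = (\<Sum>p\<in>PBB. F1 (fst p) (snd p))"
    unfolding PBB_def using finB by (simp add: sum.Sigma split_beta)
  show ?thesis unfolding e s1 s2 s3 F1_def F2_def al_def be_def by simp
qed

end


lemma lin_aux:
  fixes x1 x2 x3 A B C r1 r2 d3 d4 L :: real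
  shows "x1 \<ge> A \<Longrightarrow> x2 \<ge> B \<Longrightarrow> x3 \<ge> C - r1 - r2 + d3 + d4 \<Longrightarrow> L \<le> A + 2*B + C - r1 - r2 + d3 + d4 \<Longrightarrow> L \<le> x1 + 2*x2 + x3"
  by linarith

context kset begin

lemma QQ: "(\<Sum>p\<in>PAB. al p) = (\<Sum>p\<in>PAA. be p)"
proof -
  have inner: "(\<Sum>y\<in>B. bad A x y) = (\<Sum>y\<in>A-{x}. bad B x y)" if xA: "x \<in> A" for x
  proof -
    let ?h = "\<lambda>u w. if {x,u,w} \<notin> G then 1 else (0::real)"
    have "(\<Sum>y\<in>B. bad A x y) = (\<Sum>y\<in>B. \<Sum>v\<in>A. if v \<noteq> x \<and> v \<noteq> y \<and> {x,y,v} \<notin> G then 1 else 0)"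
      by (rule sum.cong) (auto simp: bad_ind finA)
    also have "\<dots> = (\<Sum>v\<in>A. \<Sum>y\<in>B. if v \<noteq> x \<and> v \<noteq> y \<and> {x,y,v} \<notin> G then 1 else 0)"
      by (rule sum.swap)
    also have "\<dots> = (\<Sum>v\<in>A. if v = x then 0 else \<Sum>y\<in>B. ?h y v)"
      by (rule sum.cong) (use ABd in \<open>auto intro!: sum.cong\<close>)
    also have "\<dots> = (\<Sum>v\<in>A-{x}. \<Sum>y\<in>B. ?h y v)"
      using sum.remove[OF finA xA, of "\<lambda>v. if v = x then 0 else \<Sum>y\<in>B. ?h y v"] by simp
    finally have r: "(\<Sum>y\<in>B. bad A x y) = (\<Sum>v\<in>A-{x}. \<Sum>y\<in>B. ?h y v)" .
    have "(\<Sum>y\<in>A-{x}. bad B x y) = (\<Sum>y\<in>A-{x}. \<Sum>v\<in>B. if v \<noteq> x \<and> v \<noteq> y \<and> {x,y,v} \<notin> G then 1 else 0)"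
      by (rule sum.cong) (auto simp: bad_ind finB)
    also have "\<dots> = (\<Sum>y\<in>A-{x}. \<Sum>v\<in>B. ?h v y)"
    proof (rule sum.cong[OF refl], rule sum.cong[OF refl])
      fix y v assume "y \<in> A - {x}" "v \<in> B"
      moreover have "{x,v,y} = {x,y,v}" by blast
      ultimately show "(if v \<noteq> x \<and> v \<noteq> y \<and> {x,y,v} \<notin> G then 1 else 0) = ?h v y"
        using ABd xA by auto
    qed
    finally show ?thesis using r by simp
  qed
  have "(\<Sum>p\<in>PAB. al p) = (\<Sum>x\<in>A. \<Sum>y\<in>B. bad A x y)"
    unfolding PAB_def al_def using finA finB by (simp add: sum.cartesian_product split_beta)
  also have "\<dots> = (\<Sum>x\<in>A. \<Sum>y\<in>A-{x}. bad B x y)" by (rule sum.cong) (auto simp: inner)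
  also have "\<dots> = (\<Sum>p\<in>PAA. be p)"
    unfolding PAA_def be_def using finA by (simp add: sum.Sigma split_beta)
  finally show ?thesis .
qed

lemma RR: "(\<Sum>p\<in>PAB. be p) = (\<Sum>p\<in>PBB. al p)"
proof -
  have inner: "(\<Sum>v\<in>B. \<Sum>x\<in>A. if v \<noteq> x \<and> v \<noteq> y \<and> {x,y,v} \<notin> G then 1 else (0::real)) = (\<Sum>v\<in>B-{y}. bad A y v)"
    if yB: "y \<in> B" for y
  proof -
    let ?h = "\<lambda>v x. if {x,y,v} \<notin> G then 1 else (0::real)"
    have "(\<Sum>v\<in>B. \<Sum>x\<in>A. if v \<noteq> x \<and> v \<noteq> y \<and> {x,y,v} \<notin> G then 1 else (0::real))
        = (\<Sum>v\<in>B. if v = y then 0 else \<Sum>x\<in>A. ?h v x)"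
      by (rule sum.cong) (use ABd in \<open>auto intro!: sum.cong\<close>)
    also have "\<dots> = (\<Sum>v\<in>B-{y}. \<Sum>x\<in>A. ?h v x)"
      using sum.remove[OF finB yB, of "\<lambda>v. if v = y then 0 else \<Sum>x\<in>A. ?h v x"] by simp
    also have "\<dots> = (\<Sum>v\<in>B-{y}. bad A y v)"
    proof (rule sum.cong[OF refl])
      fix v assume v: "v \<in> B - {y}"
      have "bad A y v = (\<Sum>x\<in>A. if x \<noteq> y \<and> x \<noteq> v \<and> {y,v,x} \<notin> G then 1 else 0)"
        by (simp add: bad_ind finA)
      also have "\<dots> = (\<Sum>x\<in>A. ?h v x)"
      proof (rule sum.cong[OF refl])
        fix x assume "x \<in> A"
        moreover have "{y,v,x} = {x,y,v}" by blast
        ultimately show "(if x \<noteq> y \<and> x \<noteq> v \<and> {y,v,x} \<notin> G then 1 else 0) = ?h v x"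
          using ABd v yB by auto
      qed
      finally show "(\<Sum>x\<in>A. ?h v x) = bad A y v" by simp
    qed
    finally show ?thesis .
  qed
  have "(\<Sum>p\<in>PAB. be p) = (\<Sum>x\<in>A. \<Sum>y\<in>B. bad B x y)"
    unfolding PAB_def be_def using finA finB by (simp add: sum.cartesian_product split_beta)
  also have "\<dots> = (\<Sum>x\<in>A. \<Sum>y\<in>B. \<Sum>v\<in>B. if v \<noteq> x \<and> v \<noteq> y \<and> {x,y,v} \<notin> G then 1 else (0::real))"
    by (intro sum.cong refl) (simp add: bad_ind finB)
  also have "\<dots> = (\<Sum>y\<in>B. \<Sum>x\<in>A. \<Sum>v\<in>B. if v \<noteq> x \<and> v \<noteq> y \<and> {x,y,v} \<notin> G then 1 else (0::real))"
    by (rule sum.swap)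
  also have "\<dots> = (\<Sum>y\<in>B. \<Sum>v\<in>B. \<Sum>x\<in>A. if v \<noteq> x \<and> v \<noteq> y \<and> {x,y,v} \<notin> G then 1 else (0::real))"
    by (rule sum.cong[OF refl], rule sum.swap)
  also have "\<dots> = (\<Sum>y\<in>B. \<Sum>v\<in>B-{y}. bad A y v)"
    by (rule sum.cong) (auto simp: inner)
  also have "\<dots> = (\<Sum>p\<in>PBB. al p)"
    unfolding PBB_def al_def using finB by (simp add: sum.Sigma split_beta)
  finally show ?thesis .
qed

lemma sum_pair_bound:
  assumes "P \<subseteq> {p. fst p \<in> V \<and> snd p \<in> V \<and> fst p \<noteq> snd p}" "finite P"
  shows "(\<Sum>p\<in>P. al p) + (\<Sum>p\<in>P. be p) \<le> real (card P) * (51/200 * real n)"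
proof -
  have "(\<Sum>p\<in>P. al p) + (\<Sum>p\<in>P. be p) = (\<Sum>p\<in>P. al p + be p)" by (simp add: sum.distrib)
  also have "\<dots> \<le> (\<Sum>p\<in>P. 51/200 * real n)"
  proof (rule sum_mono)
    fix p assume "p \<in> P"
    then show "al p + be p \<le> 51/200 * real n"
      using assms(1) bad_pair[of "fst p" "snd p"] unfolding al_def be_def by auto
  qed
  finally show ?thesis by simp
qed

lemma main_bound:
  assumes n1: "n \<ge> 1"
  shows "real Mcnt \<ge> real n ^ 4 / 1000 - 23 * real n ^ 3"
proof -
  define a where "a = real (card A)"
  define b where "b = real (card B)"
  define N1 where "N1 = real (card PAA)"
  define N2 where "N2 = real (card PBB)"
  define P1 where "P1 = (\<Sum>p\<in>PAA. al p)"
  define Q where "Q = (\<Sum>p\<in>PAA. be p)"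
  define R where "R = (\<Sum>p\<in>PBB. al p)"
  define P2 where "P2 = (\<Sum>p\<in>PBB. be p)"
  have nn: "real n = a + b" unfolding a_def b_def using cardAB by (metis of_nat_add)
  have N1e: "N1 = a*(a-1)" and N2e: "N2 = b*(b-1)" unfolding N1_def N2_def a_def b_def using cardP by auto
  have N1p: "N1 \<ge> 0" unfolding N1_def by simp
  have N2p: "N2 \<ge> 0" unfolding N2_def by simp
  have Pp: "P1 \<ge> 0" "Q \<ge> 0" "R \<ge> 0" "P2 \<ge> 0"
    unfolding P1_def Q_def R_def P2_def al_def be_def by (auto intro!: sum_nonneg simp: bad_nonneg)
  have sAA: "PAA \<subseteq> {p. fst p \<in> V \<and> snd p \<in> V \<and> fst p \<noteq> snd p}" unfolding PAA_def using AV by auto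
  have sAB: "PAB \<subseteq> {p. fst p \<in> V \<and> snd p \<in> V \<and> fst p \<noteq> snd p}" unfolding PAB_def using AV BV ABd by auto
  have sBB: "PBB \<subseteq> {p. fst p \<in> V \<and> snd p \<in> V \<and> fst p \<noteq> snd p}" unfolding PBB_def using BV by auto
  have c1: "P1 + Q \<le> N1 * (51/200 * real n)"
    using sum_pair_bound[OF sAA finP(1)] unfolding P1_def Q_def N1_def .
  have c2: "Q + R \<le> a * b * (51/200 * real n)"
    using sum_pair_bound[OF sAB finP(2)] QQ RR cardP(2) unfolding Q_def R_def a_def b_def by simp
  have c3: "R + P2 \<le> N2 * (51/200 * real n)"
    using sum_pair_bound[OF sBB finP(3)] unfolding R_def P2_def N2_def .
  define d1 where "d1 = 3*P1^2/N1"
  define d2 where "d2 = 3*Q^2/N1"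
  define d3 where "d3 = 3*R^2/N2"
  define d4 where "d4 = 3*P2^2/N2"
  define X1 where "X1 = (\<Sum>p\<in>PAA. (a - al p)*(a - 3*al p) + (b - be p)*(b - 3*be p))"
  define X2 where "X2 = (\<Sum>p\<in>PAB. (a - al p)*(b - 3*be p) + (b - be p)*(a - 3*al p))"
  define X3 where "X3 = (\<Sum>p\<in>PBB. (a - al p)*(a - 3*al p) + (b - be p)*(b - 3*be p))"
  have FR: "N1*(a^2+b^2) - 4*a*P1 - 4*b*Q + d1 + d2 + 2*(a*b*(2*a*b) - 4*b*Q - 4*a*R)
       + N2*(a^2+b^2) - 4*a*R - 4*b*P2 + d3 + d4 \<ge> real n^4/1000 - 5*real n^3"
    unfolding d1_def d2_def d3_def d4_def
    by (rule FinalReal) (use nn n1 N1e N2e N1p N2p Pp c1 c2 c3 a_def b_def in auto)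
  have k1: "X1 \<ge> N1*(a^2+b^2) - 4*a*P1 - 4*b*Q + d1 + d2"
    using classF1[OF finP(1), where a=a and b=b and al=al and be=be] unfolding N1_def P1_def Q_def d1_def d2_def X1_def .
  have k2: "X2 \<ge> a*b*(2*a*b) - 4*b*Q - 4*a*R"
    using classF2[OF finP(2), where a=a and b=b and al=al and be=be] cardP(2) QQ RR bad_nonneg unfolding Q_def R_def a_def b_def al_def be_def X2_def
    by simp
  have k3: "X3 \<ge> N2*(a^2+b^2) - 4*a*R - 4*b*P2 + d3 + d4"
    using classF1[OF finP(3), where a=a and b=b and al=al and be=be] unfolding N2_def R_def P2_def d3_def d4_def X3_def .
  have ps: "(\<Sum>x\<in>V. \<Sum>y\<in>V-{x}. Psi x y) = X1 + 2 * X2 + X3"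
    using pair_split unfolding X1_def X2_def X3_def a_def b_def .
  have "(\<Sum>x\<in>V. \<Sum>y\<in>V-{x}. Psi x y) \<ge> real n^4/1000 - 5*real n^3"
    unfolding ps by (rule lin_aux[OF k1 k2 k3 FR])
  then show ?thesis using M_pairs by linarith
qed

lemma Ev_bound:
  assumes "n \<ge> 1"
  shows "real (card Ev) \<ge> (real n ^ 4 / 1000 - 23 * real n ^ 3) / 256"
proof -
  have "real n ^ 4 / 1000 - 23 * real n ^ 3 \<le> 256 * real (card Ev)"
    using main_bound[OF assms] Mcnt_le by linarith
  then show ?thesis by simp
qed

end


theorem lemma8p9:
  "\<exists>c0::real. c0 > 0 \<and>
     (\<forall>b c. 0 < b \<and> b < c0 \<and> 0 < c \<and> c < c0 \<longrightarrow>
       (\<exists>n0::nat. \<forall>n\<ge>n0. \<forall>G::nat set set. \<forall>A B.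
          is_3graph {..<n} G \<longrightarrow>
          min_codeg_ge {..<n} G ((3/4 - c) * real n) \<longrightarrow>
          A \<union> B = {..<n} \<longrightarrow> A \<inter> B = {} \<longrightarrow>
          real (card {S \<in> K43_copies {..<n} G. even (card (S \<inter> A)) \<and> even (card (S \<inter> B))})
            \<ge> b * real n ^ 4))"
proof (rule exI[of _ "1/512000"], intro conjI allI impI)
  show "(0::real) < 1/512000" by simp
  fix b c :: real
  assume bc: "0 < b \<and> b < 1/512000 \<and> 0 < c \<and> c < 1/512000"
  show "\<exists>n0::nat. \<forall>n\<ge>n0. \<forall>G::nat set set. \<forall>A B.
          is_3graph {..<n} G \<longrightarrow>
          min_codeg_ge {..<n} G ((3/4 - c) * real n) \<longrightarrow>
          A \<union> B = {..<n} \<longrightarrow> A \<inter> B = {} \<longrightarrow>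
          real (card {S \<in> K43_copies {..<n} G. even (card (S \<inter> A)) \<and> even (card (S \<inter> B))})
            \<ge> b * real n ^ 4"
  proof (rule exI[of _ 46000], intro allI impI)
    fix n :: nat and G :: "nat set set" and A B :: "nat set"
    assume n: "46000 \<le> n" and h1: "is_3graph {..<n} G"
      and h2: "min_codeg_ge {..<n} G ((3/4 - c) * real n)"
      and h3: "A \<union> B = {..<n}" and h4: "A \<inter> B = {}"
    interpret K: kset n G A B c
      by unfold_locales (use h1 h2 h3 h4 bc in auto)
    have n1: "n \<ge> 1" using n by simp
    have EB: "real (card K.Ev) \<ge> (real n ^ 4 / 1000 - 23 * real n ^ 3) / 256"
      by (rule K.Ev_bound[OF n1])
    have rn: "real n \<ge> 46000" using n by simp
    have "46000 * real n ^ 3 \<le> real n * real n ^ 3"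
      using rn by (intro mult_right_mono) auto
    then have p: "46000 * real n ^ 3 \<le> real n ^ 4" by (simp add: power_Suc[symmetric] power_eq_if)
    have "b * real n ^ 4 \<le> (1/512000) * real n ^ 4"
      using bc by (intro mult_right_mono) auto
    also have "\<dots> \<le> (real n ^ 4 / 1000 - 23 * real n ^ 3) / 256"
      using p by simp
    finally show "real (card {S \<in> K43_copies {..<n} G. even (card (S \<inter> A)) \<and> even (card (S \<inter> B))})
            \<ge> b * real n ^ 4"
      using EB unfolding K.Ev_def by simp
  qed
qed


end
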